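(* Let $(\Sigma,\sigma)$ be a (possibly nodal) symmetric surface and $(V,\varphi)$ a real bundle pair over $(\Sigma,\sigma)$. For every $x\in\Sigma\setminus\Sigma^\sigma$, every open neighborhood $U\subset\Sigma$ of $x$, and every $\Psi\in\mathrm{SL}(V,\varphi)$, there exists a path $\Psi_t$ ($t\in[0,1]$) in $\mathrm{SL}(V,\varphi)$ such that $\Psi_0=\Psi$, $\Psi_1|_x=\mathrm{Id}_{V_x}$, and $\Psi_t=\Psi$ over $\Sigma\setminus(U\cup\sigma(U))$ for all $t$. The same holds with $\mathrm{SL}(V,\varphi)$ replaced by $\mathrm{GL}(V,\varphi)$.
   Context: A symmetric surface $(\Sigma,\sigma)$ is a closed oriented (possibly nodal) surface with an orientation-reversing involution $\sigma$; $\Sigma^\sigma$ is its fixed locus. A real bundle pair $(V,\varphi)$ over $(\Sigma,\sigma)$ is a complex vector bundle $V\to\Sigma$ with a bundle map $\varphi$ covering $\sigma$, anti-complex-linear on fibers, with $\varphi^2=\mathrm{id}$. $\mathrm{GL}(V,\varphi)$ is the group of $\mathbb C$-linear bundle automorphisms of $V$ covering $\mathrm{id}_\Sigma$ and commuting with $\varphi$, and $\mathrm{SL}(V,\varphi)$ the subgroup of those inducing the identity on $\Lambda^{\mathrm{top}}_{\mathbb C}V$. *)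

theory Defs
  imports "HOL-Homology.Homology" "HOL-Combinatorics.Permutations"
begin

definition node_model :: "(complex \<times> complex) set" where
  "node_model = {(z, w). z * w = 0}"

definition smooth_points :: "'a topology \<Rightarrow> 'a set" where
  "smooth_points S = {x \<in> topspace S. \<exists>W. openin S W \<and> x \<in> W \<and>
      (\<exists>D::complex set. open D \<and> subtopology S W homeomorphic_space top_of_set D)}"

definition nodal_surface :: "'a topology \<Rightarrow> bool" where
  "nodal_surface S \<longleftrightarrow> compact_space S \<and> Hausdorff_space S \<and>
     (\<forall>x \<in> topspace S. x \<in> smooth_points S \<or>
        (\<exists>W f. openin S W \<and> x \<in> W \<and>
           homeomorphic_map (subtopology S W) (top_of_set node_model) f \<and> f x = (0, 0)))"

text \<open>Homological orientation of the smooth locus M (a 2-manifold): a locally consistent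
  choice of generators of the local homology groups H_2(M, M - {y}).\<close>
definition orientation :: "'a topology \<Rightarrow> ('a \<Rightarrow> 'a chain set) \<Rightarrow> bool" where
  "orientation S ori \<longleftrightarrow>
     (let M = smooth_points S; X = subtopology S M in
       (\<forall>y \<in> M. ori y \<in> carrier (relative_homology_group 2 X (M - {y})) \<and>
          carrier (relative_homology_group 2 X (M - {y})) =
            range (\<lambda>k::int. pow (relative_homology_group 2 X (M - {y})) (ori y) k)) \<and>
       (\<forall>x \<in> M. \<exists>W. openin X W \<and> x \<in> W \<and>
          (\<exists>c \<in> carrier (relative_homology_group 2 X (M - W)).
             \<forall>y \<in> W. hom_induced 2 X (M - W) X (M - {y}) id c = ori y)))"

definition symmetric_surface :: "'a topology \<Rightarrow> ('a \<Rightarrow> 'a chain set) \<Rightarrow> ('a \<Rightarrow> 'a) \<Rightarrow> bool" where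
  "symmetric_surface S ori \<sigma> \<longleftrightarrow> nodal_surface S \<and> orientation S ori \<and>
     continuous_map S S \<sigma> \<and> (\<forall>x \<in> topspace S. \<sigma> (\<sigma> x) = x) \<and>
     (let M = smooth_points S; X = subtopology S M in
        \<forall>y \<in> M. hom_induced 2 X (M - {y}) X (M - {\<sigma> y}) \<sigma> (ori y) =
                 inv\<^bsub>relative_homology_group 2 X (M - {\<sigma> y})\<^esub> (ori (\<sigma> y)))"

definition fixed_locus :: "'a topology \<Rightarrow> ('a \<Rightarrow> 'a) \<Rightarrow> 'a set" where
  "fixed_locus S \<sigma> = {x \<in> topspace S. \<sigma> x = x}"

text \<open>Model fibre C^n, realised as complex sequences vanishing from index n on
  (with the product topology).\<close>
definition fspace :: "nat \<Rightarrow> (nat \<Rightarrow> complex) set" where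
  "fspace n = {v. \<forall>i\<ge>n. v i = 0}"

definition fiber :: "'b topology \<Rightarrow> ('b \<Rightarrow> 'a) \<Rightarrow> 'a \<Rightarrow> 'b set" where
  "fiber E p x = {e \<in> topspace E. p e = x}"

definition complex_vector_bundle ::
  "'a topology \<Rightarrow> 'b topology \<Rightarrow> ('b \<Rightarrow> 'a) \<Rightarrow> ('b \<Rightarrow> 'b \<Rightarrow> 'b) \<Rightarrow> (complex \<Rightarrow> 'b \<Rightarrow> 'b) \<Rightarrow> bool" where
  "complex_vector_bundle S E p vadd smul \<longleftrightarrow>
     continuous_map E S p \<and> p ` topspace E = topspace S \<and>
     (\<forall>e \<in> topspace E. \<forall>e' \<in> topspace E. p e = p e' \<longrightarrow>
         vadd e e' \<in> topspace E \<and> p (vadd e e') = p e) \<and>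
     (\<forall>e \<in> topspace E. \<forall>a. smul a e \<in> topspace E \<and> p (smul a e) = p e) \<and>
     (\<forall>x \<in> topspace S. \<exists>U n h. openin S U \<and> x \<in> U \<and>
        homeomorphic_map (subtopology E {e \<in> topspace E. p e \<in> U})
                         (prod_topology (subtopology S U) (top_of_set (fspace n))) h \<and>
        (\<forall>e \<in> topspace E. p e \<in> U \<longrightarrow> fst (h e) = p e) \<and>
        (\<forall>e \<in> topspace E. \<forall>e' \<in> topspace E. p e \<in> U \<and> p e = p e' \<longrightarrow>
            snd (h (vadd e e')) = (\<lambda>i. snd (h e) i + snd (h e') i)) \<and>
        (\<forall>e \<in> topspace E. \<forall>a. p e \<in> U \<longrightarrow>
            snd (h (smul a e)) = (\<lambda>i. a * snd (h e) i)))"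

definition real_bundle_pair ::
  "'a topology \<Rightarrow> ('a \<Rightarrow> 'a) \<Rightarrow> 'b topology \<Rightarrow> ('b \<Rightarrow> 'a) \<Rightarrow> ('b \<Rightarrow> 'b \<Rightarrow> 'b) \<Rightarrow>
   (complex \<Rightarrow> 'b \<Rightarrow> 'b) \<Rightarrow> ('b \<Rightarrow> 'b) \<Rightarrow> bool" where
  "real_bundle_pair S \<sigma> E p vadd smul \<phi> \<longleftrightarrow>
     complex_vector_bundle S E p vadd smul \<and> continuous_map E E \<phi> \<and>
     (\<forall>e \<in> topspace E. p (\<phi> e) = \<sigma> (p e) \<and> \<phi> (\<phi> e) = e) \<and>
     (\<forall>e \<in> topspace E. \<forall>e' \<in> topspace E. p e = p e' \<longrightarrow> \<phi> (vadd e e') = vadd (\<phi> e) (\<phi> e')) \<and>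
     (\<forall>e \<in> topspace E. \<forall>a. \<phi> (smul a e) = smul (cnj a) (\<phi> e))"

definition GL_pair ::
  "'b topology \<Rightarrow> ('b \<Rightarrow> 'a) \<Rightarrow> ('b \<Rightarrow> 'b \<Rightarrow> 'b) \<Rightarrow> (complex \<Rightarrow> 'b \<Rightarrow> 'b) \<Rightarrow> ('b \<Rightarrow> 'b) \<Rightarrow> ('b \<Rightarrow> 'b) set" where
  "GL_pair E p vadd smul \<phi> = {\<Psi>. homeomorphic_map E E \<Psi> \<and>
     (\<forall>e \<in> topspace E. p (\<Psi> e) = p e \<and> \<Psi> (\<phi> e) = \<phi> (\<Psi> e)) \<and>
     (\<forall>e \<in> topspace E. \<forall>e' \<in> topspace E. p e = p e' \<longrightarrow> \<Psi> (vadd e e') = vadd (\<Psi> e) (\<Psi> e')) \<and>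
     (\<forall>e \<in> topspace E. \<forall>a. \<Psi> (smul a e) = smul a (\<Psi> e))}"

definition fzero :: "'b topology \<Rightarrow> ('b \<Rightarrow> 'a) \<Rightarrow> (complex \<Rightarrow> 'b \<Rightarrow> 'b) \<Rightarrow> 'a \<Rightarrow> 'b" where
  "fzero E p smul x = smul 0 (SOME e. e \<in> fiber E p x)"

definition lincomb ::
  "'b topology \<Rightarrow> ('b \<Rightarrow> 'a) \<Rightarrow> ('b \<Rightarrow> 'b \<Rightarrow> 'b) \<Rightarrow> (complex \<Rightarrow> 'b \<Rightarrow> 'b) \<Rightarrow> 'a \<Rightarrow> nat \<Rightarrow>
   (nat \<Rightarrow> complex) \<Rightarrow> (nat \<Rightarrow> 'b) \<Rightarrow> 'b" where
  "lincomb E p vadd smul x n c b =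
     fold (\<lambda>i acc. vadd (smul (c i) (b i)) acc) [0..<n] (fzero E p smul x)"

definition fiber_basis ::
  "'b topology \<Rightarrow> ('b \<Rightarrow> 'a) \<Rightarrow> ('b \<Rightarrow> 'b \<Rightarrow> 'b) \<Rightarrow> (complex \<Rightarrow> 'b \<Rightarrow> 'b) \<Rightarrow> 'a \<Rightarrow> nat \<Rightarrow>
   (nat \<Rightarrow> 'b) \<Rightarrow> bool" where
  "fiber_basis E p vadd smul x n b \<longleftrightarrow> (\<forall>i<n. b i \<in> fiber E p x) \<and>
     (\<forall>v \<in> fiber E p x. \<exists>!c. c \<in> fspace n \<and> v = lincomb E p vadd smul x n c b)"

definition coords ::
  "'b topology \<Rightarrow> ('b \<Rightarrow> 'a) \<Rightarrow> ('b \<Rightarrow> 'b \<Rightarrow> 'b) \<Rightarrow> (complex \<Rightarrow> 'b \<Rightarrow> 'b) \<Rightarrow> 'a \<Rightarrow> nat \<Rightarrow>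
   (nat \<Rightarrow> 'b) \<Rightarrow> 'b \<Rightarrow> nat \<Rightarrow> complex" where
  "coords E p vadd smul x n b v = (THE c. c \<in> fspace n \<and> v = lincomb E p vadd smul x n c b)"

definition detn :: "nat \<Rightarrow> (nat \<Rightarrow> nat \<Rightarrow> complex) \<Rightarrow> complex" where
  "detn n M = (\<Sum>q | q permutes {..<n}. of_int (sign q) * (\<Prod>i<n. M i (q i)))"

text \<open>SL(V,\<phi>): elements of GL(V,\<phi>) acting trivially on the top exterior power of each
  fibre, i.e. with fibrewise determinant 1 (computed in any basis of the fibre).\<close>
definition SL_pair ::
  "'a topology \<Rightarrow> 'b topology \<Rightarrow> ('b \<Rightarrow> 'a) \<Rightarrow> ('b \<Rightarrow> 'b \<Rightarrow> 'b) \<Rightarrow> (complex \<Rightarrow> 'b \<Rightarrow> 'b) \<Rightarrow>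
   ('b \<Rightarrow> 'b) \<Rightarrow> ('b \<Rightarrow> 'b) set" where
  "SL_pair S E p vadd smul \<phi> = {\<Psi> \<in> GL_pair E p vadd smul \<phi>.
     \<forall>x \<in> topspace S. \<forall>n b. fiber_basis E p vadd smul x n b \<longrightarrow>
        detn n (\<lambda>i j. coords E p vadd smul x n b (\<Psi> (b j)) i) = 1}"

definition bundle_path :: "'b topology \<Rightarrow> ('b \<Rightarrow> 'b) set \<Rightarrow> (real \<Rightarrow> 'b \<Rightarrow> 'b) \<Rightarrow> bool" where
  "bundle_path E G \<Psi>t \<longleftrightarrow> (\<forall>t \<in> {0..1}. \<Psi>t t \<in> G) \<and>
     continuous_map (prod_topology (top_of_set {0..1}) E) E (\<lambda>(t, e). \<Psi>t t e)"

end

theory Submission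
  imports Defs "Jordan_Normal_Form.Determinant" "HOL-Analysis.Urysohn"
begin

definition idm :: "nat \<Rightarrow> nat \<Rightarrow> complex" where
  "idm i j = (if i = j then 1 else 0)"
definition mv :: "nat \<Rightarrow> (nat \<Rightarrow> nat \<Rightarrow> complex) \<Rightarrow> (nat \<Rightarrow> complex) \<Rightarrow> nat \<Rightarrow> complex" where
  "mv m G w = (\<lambda>i. if i < m then \<Sum>j<m. G i j * w j else 0)"
definition mm :: "nat \<Rightarrow> (nat \<Rightarrow> nat \<Rightarrow> complex) \<Rightarrow> (nat \<Rightarrow> nat \<Rightarrow> complex) \<Rightarrow> nat \<Rightarrow> nat \<Rightarrow> complex" where
  "mm m A B = (\<lambda>i j. \<Sum>k<m. A i k * B k j)"
definition tomat :: "nat \<Rightarrow> (nat \<Rightarrow> nat \<Rightarrow> complex) \<Rightarrow> complex mat" where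
  "tomat m M = mat m m (\<lambda>(i,j). M i j)"

lemma tomat_carrier[simp]: "tomat m M \<in> carrier_mat m m"
  by (simp add: tomat_def)

lemma detn_tomat: "detn m M = det (tomat m M)"
proof -
  have "det (tomat m M) = (\<Sum> p \<in> {p. p permutes {0 ..< m}}. signof p * (\<Prod> i = 0 ..< m. tomat m M $$ (i, p i)))"
    by (rule det_def') simp
  also have "\<dots> = (\<Sum> p \<in> {p. p permutes {..< m}}. of_int (sign p) * (\<Prod> i <m. M i (p i)))"
  proof (rule sum.cong)
    show "{p. p permutes {0..<m}} = {p. p permutes {..<m}}" by (simp add: atLeast0LessThan)
  next
    fix p assume "p \<in> {p. p permutes {..<m}}"
    hence "\<And>i. i < m \<Longrightarrow> p i < m" using permutes_in_image by fastforce
    thus "signof p * (\<Prod> i = 0 ..< m. tomat m M $$ (i, p i)) = of_int (sign p) * (\<Prod> i <m. M i (p i))"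
      by (auto simp: tomat_def atLeast0LessThan intro!: prod.cong)
  qed
  finally show ?thesis by (simp add: detn_def)
qed

lemma detn_cong: "(\<And>i j. i < m \<Longrightarrow> j < m \<Longrightarrow> A i j = B i j) \<Longrightarrow> detn m A = detn m B"
proof -
  assume h: "\<And>i j. i < m \<Longrightarrow> j < m \<Longrightarrow> A i j = B i j"
  have "tomat m A = tomat m B" by (auto simp: tomat_def h intro!: eq_matI)
  thus ?thesis by (simp add: detn_tomat)
qed

lemma tomat_mm: "tomat m (mm m A B) = tomat m A * tomat m B"
  by (rule eq_matI) (auto simp: tomat_def mm_def scalar_prod_def atLeast0LessThan intro!: sum.cong)

lemma detn_mm: "detn m (mm m A B) = detn m A * detn m B"
  by (simp add: detn_tomat tomat_mm det_mult[of _ m])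

lemma tomat_idm: "tomat m idm = 1\<^sub>m m"
  by (rule eq_matI) (auto simp: tomat_def idm_def)

lemma detn_idm[simp]: "detn m idm = 1"
  by (simp add: detn_tomat tomat_idm)

lemma detn_cnj: "detn m (\<lambda>i j. cnj (A i j)) = cnj (detn m A)"
  by (simp add: detn_def)

lemma mv_in[simp]: "mv m G w \<in> fspace m"
  by (simp add: mv_def fspace_def)

lemma mv_mv: "mv m A (mv m B w) = mv m (mm m A B) w"
proof
  fix i
  show "mv m A (mv m B w) i = mv m (mm m A B) w i"
  proof (cases "i < m")
    case True
    have "(\<Sum>j<m. A i j * (\<Sum>k<m. B j k * w k)) = (\<Sum>j<m. \<Sum>k<m. A i j * B j k * w k)"
      by (simp add: sum_distrib_left mult.assoc)
    also have "\<dots> = (\<Sum>k<m. \<Sum>j<m. A i j * B j k * w k)" by (rule sum.swap)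
    also have "\<dots> = (\<Sum>k<m. (\<Sum>j<m. A i j * B j k) * w k)" by (simp add: sum_distrib_right)
    finally show ?thesis using True by (simp add: mv_def mm_def)
  qed (simp add: mv_def)
qed

lemma mv_cong: "(\<And>i j. i < m \<Longrightarrow> j < m \<Longrightarrow> A i j = B i j) \<Longrightarrow> mv m A w = mv m B w"
  by (auto simp: mv_def intro!: sum.cong)

lemma mv_idm: "w \<in> fspace m \<Longrightarrow> mv m idm w = w"
proof
  fix i assume w: "w \<in> fspace m"
  show "mv m idm w i = w i"
  proof (cases "i < m")
    case True
    have "(\<Sum>j<m. idm i j * w j) = (\<Sum>j\<in>{i}. idm i j * w j)"
      by (rule sum.mono_neutral_right) (auto simp: idm_def True)
    thus ?thesis using True by (simp add: mv_def idm_def)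
  qed (use w in \<open>auto simp: mv_def fspace_def\<close>)
qed

lemma mv_add: "mv m G (\<lambda>i. v i + w i) = (\<lambda>i. mv m G v i + mv m G w i)"
  by (auto simp: mv_def distrib_left sum.distrib)

lemma mv_smult: "mv m G (\<lambda>i. a * v i) = (\<lambda>i. a * mv m G v i)"
  by (auto simp: mv_def sum_distrib_left algebra_simps)

lemma mv_cnj: "mv m (\<lambda>i j. cnj (G i j)) (\<lambda>i. cnj (w i)) = (\<lambda>i. cnj (mv m G w i))"
  by (auto simp: mv_def)

lemma cont_detn:
  assumes "\<And>i j. i < m \<Longrightarrow> j < m \<Longrightarrow> continuous_on S (\<lambda>s. F s i j)"
  shows "continuous_on S (\<lambda>s. detn m (F s))"
  unfolding detn_def
proof (intro continuous_intros)
  fix p i assume p: "p \<in> {q. q permutes {..<m}}" and i: "i \<in> {..<m}"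
  hence "p i < m" using permutes_in_image by fastforce
  thus "continuous_on S (\<lambda>s. F s i (p i))" using assms i by auto
qed

definition invm :: "nat \<Rightarrow> (nat \<Rightarrow> nat \<Rightarrow> complex) \<Rightarrow> nat \<Rightarrow> nat \<Rightarrow> complex" where
  "invm m M = (\<lambda>i j. adj_mat (tomat m M) $$ (i,j) / detn m M)"

lemma invm_right: assumes "detn m M \<noteq> 0" "i < m" "j < m"
  shows "mm m M (invm m M) i j = idm i j"
proof -
  have "tomat m M * adj_mat (tomat m M) = det (tomat m M) \<cdot>\<^sub>m 1\<^sub>m m"
    using adj_mat(2)[OF tomat_carrier] .
  hence "(tomat m M * adj_mat (tomat m M)) $$ (i,j) = detn m M * idm i j"
    using assms by (simp add: detn_tomat idm_def)
  moreover have "(tomat m M * adj_mat (tomat m M)) $$ (i,j) = (\<Sum>k<m. M i k * adj_mat (tomat m M) $$ (k,j))"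
    using assms adj_mat(1)[OF tomat_carrier, of m M]
    by (auto simp: scalar_prod_def tomat_def atLeast0LessThan intro!: sum.cong)
  ultimately show ?thesis using assms(1)
    by (simp add: mm_def invm_def sum_divide_distrib[symmetric])
qed

lemma invm_left: assumes "detn m M \<noteq> 0" "i < m" "j < m"
  shows "mm m (invm m M) M i j = idm i j"
proof -
  have "adj_mat (tomat m M) * tomat m M = det (tomat m M) \<cdot>\<^sub>m 1\<^sub>m m"
    using adj_mat(3)[OF tomat_carrier] .
  hence "(adj_mat (tomat m M) * tomat m M) $$ (i,j) = detn m M * idm i j"
    using assms by (simp add: detn_tomat idm_def)
  moreover have "(adj_mat (tomat m M) * tomat m M) $$ (i,j) = (\<Sum>k<m. adj_mat (tomat m M) $$ (i,k) * M k j)"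
    using assms adj_mat(1)[OF tomat_carrier, of m M]
    by (auto simp: scalar_prod_def tomat_def atLeast0LessThan intro!: sum.cong)
  ultimately show ?thesis using assms(1)
    by (simp add: mm_def invm_def sum_divide_distrib[symmetric])
qed

lemma adj_entry: assumes "i < m" "j < m"
  shows "adj_mat (tomat m M) $$ (i,j) = (-1)^(j+i) *
     detn (m - 1) (\<lambda>k l. M (if k < j then k else Suc k) (if l < i then l else Suc l))"
proof -
  have "mat_delete (tomat m M) j i = tomat (m - 1) (\<lambda>k l. M (if k < j then k else Suc k) (if l < i then l else Suc l))"
    by (rule eq_matI) (auto simp: mat_delete_def tomat_def)
  thus ?thesis using assms
    by (simp add: adj_mat_def cofactor_def tomat_def detn_tomat)
qed

lemma cont_invm:
  assumes c: "\<And>i j. i < m \<Longrightarrow> j < m \<Longrightarrow> continuous_on S (\<lambda>s. F s i j)"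
    and d: "\<And>s. s \<in> S \<Longrightarrow> detn m (F s) \<noteq> 0" and ij: "i < m" "j < m"
  shows "continuous_on S (\<lambda>s. invm m (F s) i j)"
proof -
  have "continuous_on S (\<lambda>s. (-1)^(j+i) *
     detn (m - 1) (\<lambda>k l. F s (if k < j then k else Suc k) (if l < i then l else Suc l)) / detn m (F s))"
    by (intro continuous_intros cont_detn c) (auto dest: d)
  thus ?thesis using ij by (simp add: invm_def adj_entry)
qed

definition qpoly :: "nat \<Rightarrow> (nat \<Rightarrow> nat \<Rightarrow> complex) \<Rightarrow> complex poly" where
  "qpoly m N = (\<Sum>p | p permutes {..<m}. of_int (sign p) *
      (\<Prod>i<m. [:idm i (p i), N i (p i) - idm i (p i):]))"

lemma poly_qpoly: "poly (qpoly m N) w = detn m (\<lambda>i j. (1 - w) * idm i j + w * N i j)"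
  by (simp add: qpoly_def detn_def poly_sum poly_prod algebra_simps of_int_poly)

lemma detn_rowscale: assumes "0 < m"
  shows "detn m (\<lambda>i j. if i = 0 then a * M i j else M i j) = a * detn m M"
proof -
  have "tomat m (\<lambda>i j. if i = 0 then a * M i j else M i j) = multrow 0 a (tomat m M)"
    by (rule eq_matI) (auto simp: tomat_def mat_multrow_gen_def)
  thus ?thesis using det_multrow[OF assms tomat_carrier] by (simp add: detn_tomat)
qed

lemma detn_zero[simp]: "detn 0 M = 1"
  by (simp add: detn_def)

lemma matrix_path:
  assumes N: "detn m N \<noteq> 0"
  obtains \<gamma> :: "real \<Rightarrow> nat \<Rightarrow> nat \<Rightarrow> complex" where
    "\<And>i j. i < m \<Longrightarrow> j < m \<Longrightarrow> continuous_on {0..1} (\<lambda>s. \<gamma> s i j)"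
    "\<And>i j. i < m \<Longrightarrow> j < m \<Longrightarrow> \<gamma> 0 i j = idm i j"
    "\<And>i j. i < m \<Longrightarrow> j < m \<Longrightarrow> \<gamma> 1 i j = N i j"
    "\<And>s. s \<in> {0..1} \<Longrightarrow> detn m (\<gamma> s) \<noteq> 0"
    "detn m N = 1 \<Longrightarrow> (\<And>s. s \<in> {0..1} \<Longrightarrow> detn m (\<gamma> s) = 1)"
proof -
  let ?P = "qpoly m N"
  have P0: "poly ?P 0 = 1" by (simp add: poly_qpoly)
  have P1: "poly ?P 1 = detn m N" by (simp add: poly_qpoly)
  have "?P \<noteq> 0" using P0 by auto
  hence fin: "finite {w. poly ?P w = 0}" by (rule poly_roots_finite)
  hence "path_connected (- {w. poly ?P w = 0})"
    by (intro path_connected_complement_countable) (auto simp: countable_finite)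
  moreover have "0 \<in> - {w. poly ?P w = 0}" "1 \<in> - {w. poly ?P w = 0}" using P0 P1 N by auto
  ultimately obtain g where g: "path g" "path_image g \<subseteq> - {w. poly ?P w = 0}"
      "pathstart g = 0" "pathfinish g = 1"
    unfolding path_connected_def by blast
  have gc: "continuous_on {0..1} g" using g(1) by (simp add: path_def)
  have g01: "g 0 = 0" "g 1 = 1" using g(3,4) by (auto simp: pathstart_def pathfinish_def)
  define \<gamma>0 where "\<gamma>0 = (\<lambda>s i j. (1 - g s) * idm i j + g s * N i j)"
  have d0: "detn m (\<gamma>0 s) = poly ?P (g s)" for s by (simp add: \<gamma>0_def poly_qpoly)
  have nz: "detn m (\<gamma>0 s) \<noteq> 0" if "s \<in> {0..1}" for s
    using g(2) that unfolding d0 path_image_def by blast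
  have c0: "continuous_on {0..1} (\<lambda>s. \<gamma>0 s i j)" for i j
    unfolding \<gamma>0_def by (intro continuous_intros gc)
  show ?thesis
  proof (cases "detn m N = 1")
    case False
    show ?thesis
    proof (rule that[of \<gamma>0])
      show "\<gamma>0 0 i j = idm i j" for i j by (simp add: \<gamma>0_def g01)
      show "\<gamma>0 1 i j = N i j" for i j by (simp add: \<gamma>0_def g01)
    qed (use c0 nz False in auto)
  next
    case True
    define \<gamma> where "\<gamma> = (\<lambda>s i j. if i = 0 then (1 / detn m (\<gamma>0 s)) * \<gamma>0 s i j else \<gamma>0 s i j)"
    have dg: "detn m (\<gamma> s) = 1" if "s \<in> {0..1}" for s
    proof (cases "m = 0")
      case False
      thus ?thesis using nz[OF that] unfolding \<gamma>_def by (simp add: detn_rowscale)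
    qed simp
    show ?thesis
    proof (rule that[of \<gamma>])
      show "\<gamma> 0 i j = idm i j" for i j
        by (simp add: \<gamma>_def \<gamma>0_def g01 detn_cong[of m "\<lambda>i j. 1 * idm i j + 0 * N i j" idm])
      show "\<gamma> 1 i j = N i j" for i j using True
        by (simp add: \<gamma>_def \<gamma>0_def g01 detn_cong[of m "\<lambda>i j. 0 * idm i j + 1 * N i j" N])
      show "continuous_on {0..1} (\<lambda>s. \<gamma> s i j)" for i j
        unfolding \<gamma>_def by (cases "i = 0") (auto intro!: continuous_intros c0 cont_detn simp: nz)
    qed (use dg in auto)
  qed
qed


definition uvec :: "nat \<Rightarrow> nat \<Rightarrow> complex" where
  "uvec j = (\<lambda>i. if i = j then 1 else 0)"

lemma uvec_in: "j < m \<Longrightarrow> uvec j \<in> fspace m"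
  by (auto simp: uvec_def fspace_def)

lemma fs_decomp: "w \<in> fspace m \<Longrightarrow> (\<lambda>i. \<Sum>j<m. w j * uvec j i) = w"
proof
  fix i assume w: "w \<in> fspace m"
  show "(\<Sum>j<m. w j * uvec j i) = w i"
  proof (cases "i < m")
    case True
    have "(\<Sum>j<m. w j * uvec j i) = (\<Sum>j\<in>{i}. w j * uvec j i)"
      by (rule sum.mono_neutral_right) (auto simp: uvec_def True)
    thus ?thesis by (simp add: uvec_def)
  next
    case False thus ?thesis using w by (auto simp: uvec_def fspace_def)
  qed
qed

lemma lin_matrix:
  assumes add: "\<And>v w. v \<in> fspace m \<Longrightarrow> w \<in> fspace m \<Longrightarrow> ll (\<lambda>i. v i + w i) = (\<lambda>i. ll v i + ll w i)"
    and sm: "\<And>a v. v \<in> fspace m \<Longrightarrow> ll (\<lambda>i. a * v i) = (\<lambda>i. a * ll v i)"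
    and inn: "\<And>v. v \<in> fspace m \<Longrightarrow> ll v \<in> fspace m"
    and w: "w \<in> fspace m"
  shows "ll w = mv m (\<lambda>i j. ll (uvec j) i) w"
proof -
  have z: "(\<lambda>i. 0::complex) \<in> fspace m" by (simp add: fspace_def)
  have l0: "ll (\<lambda>i. 0) = (\<lambda>i. 0)" using sm[OF z, of 0] by simp
  have gen: "J \<subseteq> {..<m} \<Longrightarrow> (\<lambda>i. \<Sum>j\<in>J. w j * uvec j i) \<in> fspace m \<and>
      ll (\<lambda>i. \<Sum>j\<in>J. w j * uvec j i) = (\<lambda>i. \<Sum>j\<in>J. w j * ll (uvec j) i)" for J
  proof (induction J rule: infinite_finite_induct)
    case (infinite A)
    thus ?case using finite_subset by blast
  next
    case empty thus ?case using z l0 by simp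
  next
    case (insert x F)
    hence x: "x < m" and IH: "(\<lambda>i. \<Sum>j\<in>F. w j * uvec j i) \<in> fspace m"
        "ll (\<lambda>i. \<Sum>j\<in>F. w j * uvec j i) = (\<lambda>i. \<Sum>j\<in>F. w j * ll (uvec j) i)" by auto
    have u: "(\<lambda>i. w x * uvec x i) \<in> fspace m" using x by (auto simp: fspace_def uvec_def)
    have "ll (\<lambda>i. \<Sum>j\<in>insert x F. w j * uvec j i) = ll (\<lambda>i. w x * uvec x i + (\<Sum>j\<in>F. w j * uvec j i))"
      using insert by simp
    also have "\<dots> = (\<lambda>i. ll (\<lambda>i. w x * uvec x i) i + ll (\<lambda>i. \<Sum>j\<in>F. w j * uvec j i) i)"
      by (rule add[OF u IH(1)])
    also have "\<dots> = (\<lambda>i. \<Sum>j\<in>insert x F. w j * ll (uvec j) i)"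
      using insert IH(2) sm[OF uvec_in[OF x], of "w x"] by simp
    finally show ?case using insert u IH(1) by (auto simp: fspace_def)
  qed
  have "ll w = (\<lambda>i. \<Sum>j<m. w j * ll (uvec j) i)"
    using gen[of "{..<m}"] fs_decomp[OF w] by simp
  moreover have "ll w \<in> fspace m" by (rule inn[OF w])
  ultimately show ?thesis
    by (auto simp: mv_def fspace_def fun_eq_iff mult.commute)
qed

locale lchart =
  fixes V :: "'b set" and vadd :: "'b \<Rightarrow> 'b \<Rightarrow> 'b" and smul :: "complex \<Rightarrow> 'b \<Rightarrow> 'b"
    and z0 :: 'b and m :: nat and \<tau> :: "'b \<Rightarrow> nat \<Rightarrow> complex"
  assumes z0: "z0 \<in> V"
    and add_in: "\<And>e e'. e \<in> V \<Longrightarrow> e' \<in> V \<Longrightarrow> vadd e e' \<in> V"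
    and smul_in: "\<And>a e. e \<in> V \<Longrightarrow> smul a e \<in> V"
    and tadd: "\<And>e e'. e \<in> V \<Longrightarrow> e' \<in> V \<Longrightarrow> \<tau> (vadd e e') = (\<lambda>i. \<tau> e i + \<tau> e' i)"
    and tsmul: "\<And>a e. e \<in> V \<Longrightarrow> \<tau> (smul a e) = (\<lambda>i. a * \<tau> e i)"
    and tz0: "\<tau> z0 = (\<lambda>i. 0)"
    and bij: "bij_betw \<tau> V (fspace m)"
begin

definition lc :: "nat \<Rightarrow> (nat \<Rightarrow> complex) \<Rightarrow> (nat \<Rightarrow> 'b) \<Rightarrow> 'b" where
  "lc n c b = fold (\<lambda>i acc. vadd (smul (c i) (b i)) acc) [0..<n] z0"

definition ti :: "(nat \<Rightarrow> complex) \<Rightarrow> 'b" where "ti = the_inv_into V \<tau>"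

definition crd :: "nat \<Rightarrow> (nat \<Rightarrow> 'b) \<Rightarrow> 'b \<Rightarrow> nat \<Rightarrow> complex" where
  "crd n b v = (THE c. c \<in> fspace n \<and> v = lc n c b)"

lemma tau_in: "e \<in> V \<Longrightarrow> \<tau> e \<in> fspace m"
  using bij by (auto simp: bij_betw_def)

lemma tau_inj: "e \<in> V \<Longrightarrow> e' \<in> V \<Longrightarrow> \<tau> e = \<tau> e' \<Longrightarrow> e = e'"
  using bij by (auto simp: bij_betw_def inj_on_def)

lemma ti_in: "w \<in> fspace m \<Longrightarrow> ti w \<in> V"
  unfolding ti_def using bij by (metis bij_betw_def the_inv_into_into order_refl)

lemma tau_ti: "w \<in> fspace m \<Longrightarrow> \<tau> (ti w) = w"
  unfolding ti_def using bij by (metis bij_betw_def f_the_inv_into_f)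

lemma ti_tau: "e \<in> V \<Longrightarrow> ti (\<tau> e) = e"
  unfolding ti_def using bij by (metis bij_betw_def the_inv_into_f_f)

lemma lc_Suc: "lc (Suc n) c b = vadd (smul (c n) (b n)) (lc n c b)"
  by (simp add: lc_def)

lemma lc_props: "(\<And>j. j < n \<Longrightarrow> b j \<in> V) \<Longrightarrow>
   lc n c b \<in> V \<and> \<tau> (lc n c b) = (\<lambda>i. \<Sum>j<n. c j * \<tau> (b j) i)"
proof (induction n)
  case 0 thus ?case by (simp add: lc_def z0 tz0)
next
  case (Suc n)
  hence IH: "lc n c b \<in> V" "\<tau> (lc n c b) = (\<lambda>i. \<Sum>j<n. c j * \<tau> (b j) i)" and bn: "b n \<in> V" by auto
  show ?case using IH bn
    by (simp add: lc_Suc add_in smul_in tadd tsmul add.commute)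
qed

lemma lin_chart:
  assumes LV: "\<And>v. v \<in> V \<Longrightarrow> L v \<in> V"
    and Ladd: "\<And>e e'. e \<in> V \<Longrightarrow> e' \<in> V \<Longrightarrow> L (vadd e e') = vadd (L e) (L e')"
    and Lsm: "\<And>a e. e \<in> V \<Longrightarrow> L (smul a e) = smul a (L e)"
    and v: "v \<in> V"
  shows "\<tau> (L v) = mv m (\<lambda>i j. \<tau> (L (ti (uvec j))) i) (\<tau> v)"
proof -
  let ?ll = "\<lambda>w. \<tau> (L (ti w))"
  have "?ll (\<tau> v) = mv m (\<lambda>i j. ?ll (uvec j) i) (\<tau> v)"
  proof (rule lin_matrix)
    fix v w :: "nat \<Rightarrow> complex" assume vw: "v \<in> fspace m" "w \<in> fspace m"
    have "ti (\<lambda>i. v i + w i) = vadd (ti v) (ti w)"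
      by (rule tau_inj) (use vw in \<open>auto simp: ti_in add_in tau_ti tadd fspace_def\<close>)
    thus "?ll (\<lambda>i. v i + w i) = (\<lambda>i. ?ll v i + ?ll w i)"
      using vw by (simp add: Ladd ti_in tadd LV)
  next
    fix a and v :: "nat \<Rightarrow> complex" assume vw: "v \<in> fspace m"
    have "ti (\<lambda>i. a * v i) = smul a (ti v)"
      by (rule tau_inj) (use vw in \<open>auto simp: ti_in smul_in tau_ti tsmul fspace_def\<close>)
    thus "?ll (\<lambda>i. a * v i) = (\<lambda>i. a * ?ll v i)"
      using vw by (simp add: Lsm ti_in tsmul LV)
  qed (auto simp: tau_in LV ti_in v)
  thus ?thesis using v by (simp add: ti_tau)
qed

lemma chart_basis:
  shows "\<And>j. j < m \<Longrightarrow> ti (uvec j) \<in> V"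
    and "\<And>v. v \<in> V \<Longrightarrow> \<exists>!c. c \<in> fspace m \<and> v = lc m c (\<lambda>j. ti (uvec j))"
proof -
  show b: "\<And>j. j < m \<Longrightarrow> ti (uvec j) \<in> V" by (simp add: ti_in uvec_in)
  have tl: "\<tau> (lc m c (\<lambda>j. ti (uvec j))) = (\<lambda>i. \<Sum>j<m. c j * uvec j i)" for c
    using lc_props[of m "\<lambda>j. ti (uvec j)" c] b by (simp add: tau_ti uvec_in)
  have lin: "lc m c (\<lambda>j. ti (uvec j)) \<in> V" for c using lc_props[of m "\<lambda>j. ti (uvec j)" c] b by simp
  fix v assume v: "v \<in> V"
  show "\<exists>!c. c \<in> fspace m \<and> v = lc m c (\<lambda>j. ti (uvec j))"
  proof (rule ex1I[of _ "\<tau> v"])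
    show "\<tau> v \<in> fspace m \<and> v = lc m (\<tau> v) (\<lambda>j. ti (uvec j))"
      using tau_in[OF v] tau_inj[OF v lin[of "\<tau> v"]] tl[of "\<tau> v"] fs_decomp[OF tau_in[OF v]] by simp
  next
    fix c assume "c \<in> fspace m \<and> v = lc m c (\<lambda>j. ti (uvec j))"
    thus "c = \<tau> v" using tl[of c] fs_decomp[of c m] by simp
  qed
qed

end

lemma sum_uvec: "k < n \<Longrightarrow> (\<Sum>j<n. uvec k j * f j) = f k"
proof -
  assume k: "k < n"
  have "(\<Sum>j<n. uvec k j * f j) = (\<Sum>j\<in>{k}. uvec k j * f j)"
    by (rule sum.mono_neutral_right) (auto simp: uvec_def k)
  thus ?thesis by (simp add: uvec_def)
qed

context lchart begin

lemma det_basis: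
  assumes bV: "\<And>j. j < n \<Longrightarrow> b j \<in> V"
    and bu: "\<And>v. v \<in> V \<Longrightarrow> \<exists>!c. c \<in> fspace n \<and> v = lc n c b"
    and LV: "\<And>v. v \<in> V \<Longrightarrow> L v \<in> V"
    and LG: "\<And>v. v \<in> V \<Longrightarrow> \<tau> (L v) = mv m G (\<tau> v)"
  shows "detn n (\<lambda>i j. crd n b (L (b j)) i) = detn m G"
proof -
  define Q where "Q = (\<lambda>i j. \<tau> (b j) i)"
  define R where "R = (\<lambda>j i. if i < m then crd n b (ti (uvec i)) j else 0)"
  have crd: "crd n b v \<in> fspace n \<and> v = lc n (crd n b v) b" if "v \<in> V" for v
    unfolding crd_def using theI'[OF bu[OF that]] .
  have crd_eq: "crd n b v = c" if "v \<in> V" "c \<in> fspace n" "v = lc n c b" for v c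
    unfolding crd_def using bu[OF that(1)] that by (auto intro!: the1_equality)
  have tlc: "\<tau> (lc n c b) = (\<lambda>i. \<Sum>j<n. c j * Q i j)" "lc n c b \<in> V" for c
    using lc_props[of n b c] bV by (auto simp: Q_def)
  have QR: "(\<Sum>j<n. Q i j * R j i') = uvec i' i" if "i' < m" for i i'
  proof -
    have "ti (uvec i') = lc n (\<lambda>j. R j i') b" using crd[OF ti_in[OF uvec_in[OF that]]] that
      by (simp add: R_def)
    hence "\<tau> (ti (uvec i')) i = (\<Sum>j<n. R j i' * Q i j)" using tlc by simp
    thus ?thesis using that by (simp add: tau_ti uvec_in mult.commute)
  qed
  have Rz: "R j i = 0" if "\<not> j < n" for i j
  proof (cases "i < m")
    case True thus ?thesis using crd[OF ti_in[OF uvec_in[OF True]]] that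
      by (auto simp: R_def fspace_def)
  qed (simp add: R_def)
  have crdf: "crd n b v = (\<lambda>j. \<Sum>i<m. R j i * \<tau> v i)" if v: "v \<in> V" for v
  proof (rule crd_eq[OF v])
    show d: "(\<lambda>j. \<Sum>i<m. R j i * \<tau> v i) \<in> fspace n" using Rz by (simp add: fspace_def)
    have "\<tau> (lc n (\<lambda>j. \<Sum>i<m. R j i * \<tau> v i) b) = \<tau> v"
    proof
      fix i0
      have "\<tau> (lc n (\<lambda>j. \<Sum>i<m. R j i * \<tau> v i) b) i0 = (\<Sum>j<n. (\<Sum>i<m. R j i * \<tau> v i) * Q i0 j)"
        by (simp add: tlc)
      also have "\<dots> = (\<Sum>j<n. \<Sum>i<m. \<tau> v i * (Q i0 j * R j i))"
        by (intro sum.cong refl) (simp add: sum_distrib_left sum_distrib_right ac_simps)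
      also have "\<dots> = (\<Sum>i<m. \<Sum>j<n. \<tau> v i * (Q i0 j * R j i))" by (rule sum.swap)
      also have "\<dots> = (\<Sum>i<m. \<tau> v i * uvec i i0)"
        by (simp add: sum_distrib_left[symmetric] QR)
      also have "\<dots> = \<tau> v i0" using fs_decomp[OF tau_in[OF v]] by metis
      finally show "\<tau> (lc n (\<lambda>j. \<Sum>i<m. R j i * \<tau> v i) b) i0 = \<tau> v i0" .
    qed
    thus "v = lc n (\<lambda>j. \<Sum>i<m. R j i * \<tau> v i) b"
      using tau_inj[OF v tlc(2)] by simp
  qed
  have RQ: "(\<Sum>i<m. R j i * Q i k) = uvec k j" if "k < n" for j k
  proof -
    have u: "uvec k \<in> fspace n" using that by (rule uvec_in)
    have "\<tau> (lc n (uvec k) b) = \<tau> (b k)"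
      using that by (simp add: tlc sum_uvec Q_def)
    hence "b k = lc n (uvec k) b" using tau_inj[OF bV[OF that] tlc(2)] by simp
    hence "crd n b (b k) = uvec k" using crd_eq[OF bV[OF that] u] by simp
    thus ?thesis using crdf[OF bV[OF that]] by (simp add: fun_eq_iff Q_def mult.commute)
  qed
  have "of_nat n = (\<Sum>j<n. \<Sum>i<m. R j i * Q i j :: complex)"
    by (simp add: RQ uvec_def)
  also have "\<dots> = (\<Sum>i<m. \<Sum>j<n. Q i j * R j i)" by (subst sum.swap) (simp add: mult.commute)
  also have "\<dots> = of_nat m" by (simp add: QR uvec_def)
  finally have nm: "n = m" by simp
  have Mb: "crd n b (L (b k)) j = mm m R (mm m G Q) j k" if "k < n" for j k
  proof -
    have "crd n b (L (b k)) j = (\<Sum>i<m. R j i * mv m G (\<tau> (b k)) i)"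
      using crdf[OF LV[OF bV[OF that]]] LG[OF bV[OF that]] by simp
    also have "\<dots> = mm m R (mm m G Q) j k"
      by (auto simp: mm_def mv_def Q_def intro!: sum.cong)
    finally show ?thesis .
  qed
  have "detn n (\<lambda>i j. crd n b (L (b j)) i) = detn m (mm m R (mm m G Q))"
    using nm Mb by (auto intro!: detn_cong)
  also have "\<dots> = detn m G * (detn m R * detn m Q)" by (simp add: detn_mm)
  also have "detn m R * detn m Q = detn m (mm m R Q)" by (simp add: detn_mm)
  also have "\<dots> = detn m idm" using nm RQ by (intro detn_cong) (auto simp: mm_def uvec_def idm_def)
  finally show ?thesis by simp
qed
lemma det_comp:
  assumes bV: "\<And>j. j < n \<Longrightarrow> b j \<in> V"
    and bu: "\<And>v. v \<in> V \<Longrightarrow> \<exists>!c. c \<in> fspace n \<and> v = lc n c b"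
    and PV: "\<And>v. v \<in> V \<Longrightarrow> P v \<in> V"
    and Padd: "\<And>e e'. e \<in> V \<Longrightarrow> e' \<in> V \<Longrightarrow> P (vadd e e') = vadd (P e) (P e')"
    and Psm: "\<And>a e. e \<in> V \<Longrightarrow> P (smul a e) = smul a (P e)"
    and AV: "\<And>v. v \<in> V \<Longrightarrow> A v \<in> V"
    and AH: "\<And>v. v \<in> V \<Longrightarrow> \<tau> (A v) = mv m H (\<tau> v)"
    and H1: "detn m H = 1"
  shows "detn n (\<lambda>i j. crd n b (P (A (b j))) i) = detn n (\<lambda>i j. crd n b (P (b j)) i)"
proof -
  let ?G = "\<lambda>i j. \<tau> (P (ti (uvec j))) i"
  have PG: "\<tau> (P v) = mv m ?G (\<tau> v)" if "v \<in> V" for v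
    by (rule lin_chart[OF PV Padd Psm that])
  have "detn n (\<lambda>i j. crd n b (P (A (b j))) i) = detn m (mm m ?G H)"
    by (rule det_basis[OF bV bu]) (auto simp: PV AV PG AH mv_mv)
  also have "\<dots> = detn m ?G" by (simp add: detn_mm H1)
  also have "\<dots> = detn n (\<lambda>i j. crd n b (P (b j)) i)"
    by (rule det_basis[OF bV bu, symmetric]) (auto simp: PV PG)
  finally show ?thesis .
qed

end

lemma cont_local:
  assumes "\<And>z. z \<in> topspace X \<Longrightarrow> \<exists>T. openin X T \<and> z \<in> T \<and> continuous_map (subtopology X T) Y g"
  shows "continuous_map X Y g"
proof (rule pasting_lemma[where I = "{T. openin X T \<and> continuous_map (subtopology X T) Y g}"
      and T = "\<lambda>T. T" and f = "\<lambda>T. g"])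
  fix z assume "z \<in> topspace X"
  thus "\<exists>j. j \<in> {T. openin X T \<and> continuous_map (subtopology X T) Y g} \<and> z \<in> j \<and> g z = g z"
    using assms by blast
qed auto

lemma cmult:
  fixes f g :: "'a \<Rightarrow> 'b::real_normed_algebra"
  shows "continuous_map X euclidean f \<Longrightarrow> continuous_map X euclidean g \<Longrightarrow>
     continuous_map X euclidean (\<lambda>x. f x * g x)"
  by (simp add: continuous_map_atin tendsto_mult)

lemma fsp_cont:
  assumes "\<And>i. continuous_map X euclidean (\<lambda>x. F x i)" "\<And>x. x \<in> topspace X \<Longrightarrow> F x \<in> fspace m"
  shows "continuous_map X (top_of_set (fspace m)) F"
proof -
  have "continuous_map X (product_topology (\<lambda>i. euclidean) UNIV) F"
    using assms(1) by (simp add: continuous_map_componentwise_UNIV)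
  hence "continuous_map X euclidean F" by (simp add: euclidean_product_topology)
  thus ?thesis using assms(2) by (auto simp: continuous_map_in_subtopology)
qed

lemma fsp_comp:
  assumes "continuous_map X (top_of_set (fspace m)) F"
  shows "continuous_map X euclidean (\<lambda>x. F x i)"
proof -
  have "continuous_map X euclidean F" using continuous_map_into_fulltopology[OF assms] .
  hence "continuous_map X (product_topology (\<lambda>i. euclidean) UNIV) F"
    by (simp add: euclidean_product_topology)
  thus ?thesis by (simp add: continuous_map_componentwise_UNIV)
qed

lemma cont_on_comp:
  assumes "continuous_map X (top_of_set S) g" "continuous_on S F"
  shows "continuous_map X euclidean (\<lambda>x. F (g x))"
  using continuous_map_compose[OF assms(1), of euclidean F] assms(2) by (simp add: o_def)


locale cons =
  fixes S :: "'a topology" and \<sigma> :: "'a \<Rightarrow> 'a" and E :: "'b topology" and p :: "'b \<Rightarrow> 'a"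
    and vadd :: "'b \<Rightarrow> 'b \<Rightarrow> 'b" and smul :: "complex \<Rightarrow> 'b \<Rightarrow> 'b" and \<phi> :: "'b \<Rightarrow> 'b"
    and U1 :: "'a set" and m :: nat and h :: "'b \<Rightarrow> 'a \<times> (nat \<Rightarrow> complex)"
    and k :: "'a \<times> (nat \<Rightarrow> complex) \<Rightarrow> 'b" and U0 W :: "'a set" and f :: "'a \<Rightarrow> real"
  assumes pc: "continuous_map E S p"
    and psurj: "p ` topspace E = topspace S"
    and vadd_in: "\<forall>e\<in>topspace E. \<forall>e'\<in>topspace E. p e = p e' \<longrightarrow> vadd e e' \<in> topspace E \<and> p (vadd e e') = p e"
    and smul_in: "\<forall>e\<in>topspace E. \<forall>a. smul a e \<in> topspace E \<and> p (smul a e) = p e"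
    and U1: "openin S U1"
    and hk: "homeomorphic_maps (subtopology E {e \<in> topspace E. p e \<in> U1})
                 (prod_topology (subtopology S U1) (top_of_set (fspace m))) h k"
    and hfst: "\<forall>e\<in>topspace E. p e \<in> U1 \<longrightarrow> fst (h e) = p e"
    and hadd: "\<forall>e\<in>topspace E. \<forall>e'\<in>topspace E. p e \<in> U1 \<and> p e = p e' \<longrightarrow>
                 snd (h (vadd e e')) = (\<lambda>i. snd (h e) i + snd (h e') i)"
    and hsm: "\<forall>e\<in>topspace E. \<forall>a. p e \<in> U1 \<longrightarrow> snd (h (smul a e)) = (\<lambda>i. a * snd (h e) i)"
    and phic: "continuous_map E E \<phi>"
    and phip: "\<forall>e\<in>topspace E. p (\<phi> e) = \<sigma> (p e) \<and> \<phi> (\<phi> e) = e"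
    and phiadd: "\<forall>e\<in>topspace E. \<forall>e'\<in>topspace E. p e = p e' \<longrightarrow> \<phi> (vadd e e') = vadd (\<phi> e) (\<phi> e')"
    and phism: "\<forall>e\<in>topspace E. \<forall>a. \<phi> (smul a e) = smul (cnj a) (\<phi> e)"
    and sigc: "continuous_map S S \<sigma>"
    and sigsig: "\<forall>y\<in>topspace S. \<sigma> (\<sigma> y) = y"
    and U0: "openin S U0" and U01: "U0 \<subseteq> U1" and U0sig: "\<forall>y\<in>U0. \<sigma> y \<notin> U0"
    and W: "openin S W" and cover: "\<forall>y\<in>topspace S. y \<in> U0 \<or> \<sigma> y \<in> U0 \<or> y \<in> W"
    and Wf: "\<forall>y\<in>W. f y = 0 \<and> f (\<sigma> y) = 0"
    and fc: "continuous_map S (top_of_set {0..1}) f"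
begin

definition act :: "(real \<Rightarrow> nat \<Rightarrow> nat \<Rightarrow> complex) \<Rightarrow> real \<Rightarrow> 'b \<Rightarrow> 'b" where
  "act G t e = k (p e, mv m (G (t * f (p e))) (snd (h e)))"

definition Am :: "(real \<Rightarrow> nat \<Rightarrow> nat \<Rightarrow> complex) \<Rightarrow> real \<Rightarrow> 'b \<Rightarrow> 'b" where
  "Am G t e = (if p e \<in> U0 then act G t e else if \<sigma> (p e) \<in> U0 then \<phi> (act G t (\<phi> e)) else e)"

lemma p_in: "e \<in> topspace E \<Longrightarrow> p e \<in> topspace S"
  using pc by (meson continuous_map_def funcset_mem)

lemma U1S: "U1 \<subseteq> topspace S" using U1 by (rule openin_subset)
lemma U0S: "U0 \<subseteq> topspace S" using U0 by (rule openin_subset)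

lemma phi_in: "e \<in> topspace E \<Longrightarrow> \<phi> e \<in> topspace E"
  using phic by (meson continuous_map_def funcset_mem)

lemma sig_in: "y \<in> topspace S \<Longrightarrow> \<sigma> y \<in> topspace S"
  using sigc by (meson continuous_map_def funcset_mem)

lemma k1: assumes "y \<in> U1" "v \<in> fspace m"
  shows "k (y,v) \<in> topspace E" "p (k (y,v)) = y" "h (k (y,v)) = (y,v)" "snd (h (k (y,v))) = v"
proof -
  have yv: "(y,v) \<in> topspace (prod_topology (subtopology S U1) (top_of_set (fspace m)))"
    using assms U1S by auto
  have "k (y,v) \<in> topspace (subtopology E {e \<in> topspace E. p e \<in> U1})"
    using hk yv unfolding homeomorphic_maps_def by (meson continuous_map_def funcset_mem)
  hence ke: "k (y,v) \<in> topspace E" "p (k (y,v)) \<in> U1" by auto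
  show hkk: "h (k (y,v)) = (y,v)" using hk yv unfolding homeomorphic_maps_def by blast
  show "k (y,v) \<in> topspace E" by (rule ke(1))
  show "p (k (y,v)) = y" using hfst ke hkk by (metis fst_conv)
  show "snd (h (k (y,v))) = v" using hkk by simp
qed

lemma h1: assumes "e \<in> topspace E" "p e \<in> U1"
  shows "snd (h e) \<in> fspace m" "k (p e, snd (h e)) = e"
proof -
  have et: "e \<in> topspace (subtopology E {e \<in> topspace E. p e \<in> U1})" using assms by auto
  hence "h e \<in> topspace (prod_topology (subtopology S U1) (top_of_set (fspace m)))"
    using hk unfolding homeomorphic_maps_def by (meson continuous_map_def funcset_mem)
  thus "snd (h e) \<in> fspace m" by (auto simp: mem_Times_iff)
  have "h e = (p e, snd (h e))" using hfst assms by (metis prod.collapse)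
  moreover have "k (h e) = e" using hk et unfolding homeomorphic_maps_def by blast
  ultimately show "k (p e, snd (h e)) = e" by simp
qed

lemma h_inj: assumes "e \<in> topspace E" "e' \<in> topspace E" "p e \<in> U1" "p e = p e'" "snd (h e) = snd (h e')"
  shows "e = e'"
  using h1[OF assms(1,3)] h1[OF assms(2)] assms by metis

lemma act_props: assumes "e \<in> topspace E" "p e \<in> U1"
  shows "act G t e \<in> topspace E" "p (act G t e) = p e"
    "snd (h (act G t e)) = mv m (G (t * f (p e))) (snd (h e))"
  using k1[OF assms(2) mv_in] by (auto simp: act_def)

lemma Am_in: assumes "e \<in> topspace E"
  shows "Am G t e \<in> topspace E \<and> p (Am G t e) = p e"
proof -
  consider "p e \<in> U0" | "p e \<notin> U0" "\<sigma> (p e) \<in> U0" | "p e \<notin> U0" "\<sigma> (p e) \<notin> U0" by blast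
  thus ?thesis
  proof cases
    case 1 thus ?thesis using act_props[OF assms] U01 by (auto simp: Am_def)
  next
    case 2
    have pe: "\<phi> e \<in> topspace E" "p (\<phi> e) \<in> U1" "p (\<phi> e) = \<sigma> (p e)" using phi_in assms phip 2 U01 by auto
    show ?thesis using 2 act_props[OF pe(1,2)] pe phi_in phip sigsig p_in[OF assms]
      by (auto simp: Am_def)
  next
    case 3 thus ?thesis using assms by (auto simp: Am_def)
  qed
qed

lemma act_id: assumes "e \<in> topspace E" "p e \<in> U1" "\<And>i j. i < m \<Longrightarrow> j < m \<Longrightarrow> G (t * f (p e)) i j = idm i j"
  shows "act G t e = e"
proof -
  have "mv m (G (t * f (p e))) (snd (h e)) = mv m idm (snd (h e))" by (rule mv_cong) (rule assms(3))
  thus ?thesis using h1[OF assms(1,2)] mv_idm by (simp add: act_def)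
qed

lemma Am_id0: assumes "e \<in> topspace E" "\<And>i j. i < m \<Longrightarrow> j < m \<Longrightarrow> G 0 i j = idm i j"
  shows "Am G 0 e = e"
proof -
  have "\<phi> e \<in> topspace E" using phi_in assms by auto
  thus ?thesis using act_id[of e G 0] act_id[of "\<phi> e" G 0] assms U01 phip by (auto simp: Am_def)
qed

lemma Am_phi: assumes "e \<in> topspace E"
  shows "Am G t (\<phi> e) = \<phi> (Am G t e)"
proof -
  have pe: "\<phi> e \<in> topspace E" "p (\<phi> e) = \<sigma> (p e)" "\<phi> (\<phi> e) = e" using phi_in assms phip by auto
  have ss: "\<sigma> (\<sigma> (p e)) = p e" using sigsig p_in[OF assms] by auto
  consider "p e \<in> U0" | "p e \<notin> U0" "\<sigma> (p e) \<in> U0" | "p e \<notin> U0" "\<sigma> (p e) \<notin> U0" by blast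
  thus ?thesis
  proof cases
    case 1 thus ?thesis using pe ss U0sig by (auto simp: Am_def)
  next
    case 2
    have "act G t (\<phi> e) \<in> topspace E" using act_props pe 2 U01 by auto
    thus ?thesis using pe ss 2 phip by (auto simp: Am_def)
  next
    case 3 thus ?thesis using pe ss by (auto simp: Am_def)
  qed
qed

lemma act_add: assumes "e \<in> topspace E" "e' \<in> topspace E" "p e \<in> U1" "p e = p e'"
  shows "act G t (vadd e e') = vadd (act G t e) (act G t e')"
proof -
  have v: "vadd e e' \<in> topspace E" "p (vadd e e') = p e" using vadd_in assms by auto
  have a: "act G t e \<in> topspace E" "p (act G t e) = p e" "act G t e' \<in> topspace E" "p (act G t e') = p e"
    using act_props assms by auto
  have r: "vadd (act G t e) (act G t e') \<in> topspace E" "p (vadd (act G t e) (act G t e')) = p e"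
    using vadd_in a by auto
  show ?thesis
  proof (rule h_inj)
    show "snd (h (act G t (vadd e e'))) = snd (h (vadd (act G t e) (act G t e')))"
      using act_props[OF v(1)] act_props[OF assms(1,3)] act_props[OF assms(2)] assms v a hadd
      by (simp add: mv_add)
  qed (use act_props[OF v(1)] v r assms in auto)
qed

lemma act_sm: assumes "e \<in> topspace E" "p e \<in> U1"
  shows "act G t (smul a e) = smul a (act G t e)"
proof -
  have v: "smul a e \<in> topspace E" "p (smul a e) = p e" using smul_in assms by auto
  have a: "act G t e \<in> topspace E" "p (act G t e) = p e" using act_props assms by auto
  have r: "smul a (act G t e) \<in> topspace E" "p (smul a (act G t e)) = p e" using smul_in a by auto
  show ?thesis
  proof (rule h_inj)
    show "snd (h (act G t (smul a e))) = snd (h (smul a (act G t e)))"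
      using act_props[OF v(1)] act_props[OF assms] assms v a hsm by (simp add: mv_smult)
  qed (use act_props[OF v(1)] v r assms in auto)
qed

lemma Am_add: assumes "e \<in> topspace E" "e' \<in> topspace E" "p e = p e'"
  shows "Am G t (vadd e e') = vadd (Am G t e) (Am G t e')"
proof -
  have v: "vadd e e' \<in> topspace E" "p (vadd e e') = p e" using vadd_in assms by auto
  consider "p e \<in> U0" | "p e \<notin> U0" "\<sigma> (p e) \<in> U0" | "p e \<notin> U0" "\<sigma> (p e) \<notin> U0" by blast
  thus ?thesis
  proof cases
    case 1 thus ?thesis using act_add[OF assms(1,2) _ assms(3)] U01 v assms by (auto simp: Am_def)
  next
    case 2
    have pe: "\<phi> e \<in> topspace E" "\<phi> e' \<in> topspace E" "p (\<phi> e) = \<sigma> (p e)" "p (\<phi> e') = \<sigma> (p e)"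
      using phi_in assms phip by auto
    have "act G t (\<phi> (vadd e e')) = vadd (act G t (\<phi> e)) (act G t (\<phi> e'))"
      using phiadd assms act_add[OF pe(1,2)] pe 2 U01 by auto
    moreover have "\<phi> (vadd (act G t (\<phi> e)) (act G t (\<phi> e'))) = vadd (\<phi> (act G t (\<phi> e))) (\<phi> (act G t (\<phi> e')))"
      using phiadd act_props pe 2 U01 by auto
    ultimately show ?thesis using 2 v assms by (auto simp: Am_def)
  next
    case 3 thus ?thesis using v assms by (auto simp: Am_def)
  qed
qed

lemma Am_sm: assumes "e \<in> topspace E"
  shows "Am G t (smul a e) = smul a (Am G t e)"
proof -
  have v: "smul a e \<in> topspace E" "p (smul a e) = p e" using smul_in assms by auto
  consider "p e \<in> U0" | "p e \<notin> U0" "\<sigma> (p e) \<in> U0" | "p e \<notin> U0" "\<sigma> (p e) \<notin> U0" by blast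
  thus ?thesis
  proof cases
    case 1 thus ?thesis using act_sm[OF assms] U01 v by (auto simp: Am_def)
  next
    case 2
    have pe: "\<phi> e \<in> topspace E" "p (\<phi> e) = \<sigma> (p e)" using phi_in assms phip by auto
    have "act G t (\<phi> (smul a e)) = smul (cnj a) (act G t (\<phi> e))"
      using phism assms act_sm[OF pe(1)] pe 2 U01 by auto
    moreover have "\<phi> (smul (cnj a) (act G t (\<phi> e))) = smul a (\<phi> (act G t (\<phi> e)))"
      using phism act_props pe 2 U01 by auto
    ultimately show ?thesis using 2 v by (auto simp: Am_def)
  next
    case 3 thus ?thesis using v by (auto simp: Am_def)
  qed
qed

lemma act_inv: assumes "e \<in> topspace E" "p e \<in> U1"
    "\<And>i j. i < m \<Longrightarrow> j < m \<Longrightarrow> mm m (G (t * f (p e))) (D (t * f (p e))) i j = idm i j"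
  shows "act G t (act D t e) = e"
proof -
  have a: "act D t e \<in> topspace E" "p (act D t e) = p e" using act_props assms by auto
  have "snd (h (act G t (act D t e))) = mv m (mm m (G (t * f (p e))) (D (t * f (p e)))) (snd (h e))"
    using act_props[OF a(1)] act_props[OF assms(1,2)] a assms by (simp add: mv_mv)
  also have "\<dots> = mv m idm (snd (h e))" by (rule mv_cong) (rule assms(3))
  also have "\<dots> = snd (h e)" using h1 assms by (simp add: mv_idm)
  finally show ?thesis using act_props[OF a(1)] a assms by (intro h_inj) auto
qed

lemma Am_inv: assumes "e \<in> topspace E"
    "\<And>s i j. s \<in> {0..1} \<Longrightarrow> i < m \<Longrightarrow> j < m \<Longrightarrow> mm m (G s) (D s) i j = idm i j"
    "t \<in> {0..1}"
  shows "Am G t (Am D t e) = e"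
proof -
  have fr: "t * f y \<in> {0..1}" if "y \<in> topspace S" for y
  proof -
    have "f y \<in> {0..1}" using continuous_map_image_subset_topspace[OF fc] that by auto
    thus ?thesis using assms(3) by (auto simp: mult_le_one)
  qed
  have pe: "p e \<in> topspace S" using p_in assms by auto
  consider "p e \<in> U0" | "p e \<notin> U0" "\<sigma> (p e) \<in> U0" | "p e \<notin> U0" "\<sigma> (p e) \<notin> U0" by blast
  thus ?thesis
  proof cases
    case 1 thus ?thesis using act_inv[OF assms(1)] act_props[OF assms(1)] U01 assms(2) fr[OF pe]
      by (auto simp: Am_def)
  next
    case 2
    have ph: "\<phi> e \<in> topspace E" "p (\<phi> e) = \<sigma> (p e)" "\<phi> (\<phi> e) = e" using phi_in assms phip by auto
    have ad: "act D t (\<phi> e) \<in> topspace E" "p (act D t (\<phi> e)) = \<sigma> (p e)" using act_props ph 2 U01 by auto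
    have "Am D t e = \<phi> (act D t (\<phi> e))" using 2 by (simp add: Am_def)
    moreover have "p (\<phi> (act D t (\<phi> e))) = p e" using ad phip sigsig pe by auto
    moreover have "\<phi> (\<phi> (act D t (\<phi> e))) = act D t (\<phi> e)" using ad phip by auto
    moreover have "act G t (act D t (\<phi> e)) = \<phi> e"
      using act_inv[OF ph(1)] ph 2 U01 assms(2) fr[OF sig_in[OF pe]] by auto
    ultimately show ?thesis using 2 ph by (simp add: Am_def)
  next
    case 3 thus ?thesis by (simp add: Am_def)
  qed
qed

end

context cons begin

abbreviation "XX \<equiv> prod_topology (top_of_set {0..1::real}) E"

lemma act_cont:
  assumes Gc: "\<And>i j. i < m \<Longrightarrow> j < m \<Longrightarrow> continuous_on {0..1} (\<lambda>s. G s i j)"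
  shows "continuous_map (subtopology XX {z \<in> topspace XX. p (snd z) \<in> U0}) E (\<lambda>z. act G (fst z) (snd z))"
proof -
  let ?T = "{z \<in> topspace XX. p (snd z) \<in> U0}"
  let ?Z = "subtopology XX ?T"
  let ?Y = "prod_topology (subtopology S U1) (top_of_set (fspace m))"
  have tZ: "topspace ?Z = ?T" by auto
  have snd_c: "continuous_map ?Z (subtopology E {e \<in> topspace E. p e \<in> U1}) snd"
    by (rule continuous_map_into_subtopology)
       (use U01 in \<open>auto intro!: continuous_map_from_subtopology continuous_map_snd\<close>)
  have hc: "continuous_map (subtopology E {e \<in> topspace E. p e \<in> U1}) ?Y h"
    using hk by (simp add: homeomorphic_maps_def)
  have kc: "continuous_map ?Y E k"
    using hk by (auto simp: homeomorphic_maps_def intro: continuous_map_into_fulltopology)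
  have psc: "continuous_map ?Z S (\<lambda>z. p (snd z))"
    using continuous_map_compose[OF continuous_map_into_fulltopology[OF snd_c] pc] by (simp add: o_def)
  have fstc: "continuous_map ?Z euclideanreal fst"
    by (intro continuous_map_from_subtopology continuous_map_into_fulltopology[OF continuous_map_fst])
  have fpc: "continuous_map ?Z (top_of_set {0..1}) (\<lambda>z. f (p (snd z)))"
    using continuous_map_compose[OF psc fc] by (simp add: o_def)
  have argc: "continuous_map ?Z (top_of_set {0..1}) (\<lambda>z. fst z * f (p (snd z)))"
  proof (rule continuous_map_into_subtopology)
    show "continuous_map ?Z euclideanreal (\<lambda>z. fst z * f (p (snd z)))"
      by (intro continuous_map_real_mult fstc continuous_map_into_fulltopology[OF fpc])
    show "(\<lambda>z. fst z * f (p (snd z))) \<in> topspace ?Z \<rightarrow> {0..1}"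
      using continuous_map_image_subset_topspace[OF fpc] by (fastforce intro: mult_le_one)
  qed
  have hsc: "continuous_map ?Z (top_of_set (fspace m)) (\<lambda>z. snd (h (snd z)))"
    using continuous_map_compose[OF continuous_map_compose[OF snd_c hc] continuous_map_snd]
    by (simp add: o_def)
  have pair: "continuous_map ?Z ?Y (\<lambda>z. (p (snd z), mv m (G (fst z * f (p (snd z)))) (snd (h (snd z)))))"
  proof (intro continuous_map_pairedI)
    show "continuous_map ?Z (subtopology S U1) (\<lambda>z. p (snd z))"
      by (rule continuous_map_into_subtopology[OF psc]) (use U01 in auto)
    show "continuous_map ?Z (top_of_set (fspace m)) (\<lambda>z. mv m (G (fst z * f (p (snd z)))) (snd (h (snd z))))"
    proof (rule fsp_cont)
      fix i
      show "continuous_map ?Z euclidean (\<lambda>z. mv m (G (fst z * f (p (snd z)))) (snd (h (snd z))) i)"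
      proof (cases "i < m")
        case True
        have "continuous_map ?Z euclidean (\<lambda>z. \<Sum>j<m. G (fst z * f (p (snd z))) i j * snd (h (snd z)) j)"
          by (intro continuous_map_sum cmult cont_on_comp[OF argc] Gc True fsp_comp[OF hsc]) auto
        thus ?thesis using True by (simp add: mv_def)
      qed (simp add: mv_def)
    qed simp
  qed
  show ?thesis
    using continuous_map_compose[OF pair kc] by (simp add: o_def act_def)
qed

lemma Am_cont:
  assumes Gc: "\<And>i j. i < m \<Longrightarrow> j < m \<Longrightarrow> continuous_on {0..1} (\<lambda>s. G s i j)"
    and G0: "\<And>i j. i < m \<Longrightarrow> j < m \<Longrightarrow> G 0 i j = idm i j"
  shows "continuous_map XX E (\<lambda>z. Am G (fst z) (snd z))"
proof (rule cont_local)
  let ?T1 = "{z \<in> topspace XX. p (snd z) \<in> U0}"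
  let ?T2 = "{z \<in> topspace XX. \<sigma> (p (snd z)) \<in> U0}"
  let ?T3 = "{z \<in> topspace XX. p (snd z) \<in> W}"
  have psX: "continuous_map XX S (\<lambda>z. p (snd z))"
    using continuous_map_compose[OF continuous_map_snd pc] by (simp add: o_def)
  have spsX: "continuous_map XX S (\<lambda>z. \<sigma> (p (snd z)))"
    using continuous_map_compose[OF psX sigc] by (simp add: o_def)
  have o1: "openin XX ?T1" by (rule openin_continuous_map_preimage[OF psX U0])
  have o2: "openin XX ?T2" by (rule openin_continuous_map_preimage[OF spsX U0])
  have o3: "openin XX ?T3" by (rule openin_continuous_map_preimage[OF psX W])
  have c1: "continuous_map (subtopology XX ?T1) E (\<lambda>z. act G (fst z) (snd z))"
    by (rule act_cont[OF Gc])
  have swc: "continuous_map (subtopology XX ?T2) (subtopology XX ?T1) (\<lambda>z. (fst z, \<phi> (snd z)))"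
  proof (rule continuous_map_into_subtopology)
    show "continuous_map (subtopology XX ?T2) XX (\<lambda>z. (fst z, \<phi> (snd z)))"
      by (intro continuous_map_from_subtopology continuous_map_pairedI continuous_map_fst)
         (use continuous_map_compose[OF continuous_map_snd phic] in \<open>simp add: o_def\<close>)
    show "(\<lambda>z. (fst z, \<phi> (snd z))) \<in> topspace (subtopology XX ?T2) \<rightarrow> ?T1"
      using phi_in phip by auto
  qed
  have c2: "continuous_map (subtopology XX ?T2) E (\<lambda>z. \<phi> (act G (fst z) (\<phi> (snd z))))"
    using continuous_map_compose[OF continuous_map_compose[OF swc c1] phic] by (simp add: o_def)
  have c3: "continuous_map (subtopology XX ?T3) E snd"
    by (intro continuous_map_from_subtopology continuous_map_snd)
  fix z assume z: "z \<in> topspace XX"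
  hence e: "snd z \<in> topspace E" "fst z \<in> {0..1}" by auto
  have ps: "p (snd z) \<in> topspace S" using p_in e by auto
  consider "p (snd z) \<in> U0" | "p (snd z) \<notin> U0" "\<sigma> (p (snd z)) \<in> U0" | "p (snd z) \<notin> U0" "\<sigma> (p (snd z)) \<notin> U0"
    by blast
  thus "\<exists>T. openin XX T \<and> z \<in> T \<and> continuous_map (subtopology XX T) E (\<lambda>z. Am G (fst z) (snd z))"
  proof cases
    case 1
    have "continuous_map (subtopology XX ?T1) E (\<lambda>z. Am G (fst z) (snd z))"
      by (rule continuous_map_eq[OF c1]) (auto simp: Am_def)
    thus ?thesis using o1 z 1 by blast
  next
    case 2
    have "Am G (fst w) (snd w) = \<phi> (act G (fst w) (\<phi> (snd w)))" if "w \<in> topspace (subtopology XX ?T2)" for w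
    proof -
      have "p (snd w) \<notin> U0" using that U0sig sigsig p_in by force
      thus ?thesis using that by (simp add: Am_def)
    qed
    thus ?thesis
      by (intro exI[of _ ?T2]) (use o2 z 2 continuous_map_eq[OF c2] in auto)
  next
    case 3
    hence w: "p (snd z) \<in> W" using cover ps by auto
    have "snd w = Am G (fst w) (snd w)" if "w \<in> topspace (subtopology XX ?T3)" for w
    proof -
      have we: "snd w \<in> topspace E" "p (snd w) \<in> W" using that by auto
      have f0: "f (p (snd w)) = 0" "f (\<sigma> (p (snd w))) = 0" using Wf we by auto
      have ph: "\<phi> (snd w) \<in> topspace E" "p (\<phi> (snd w)) = \<sigma> (p (snd w))" "\<phi> (\<phi> (snd w)) = snd w"
        using phi_in phip we by auto
      show ?thesis
        using act_id[OF we(1), of G "fst w"] act_id[OF ph(1), of G "fst w"] f0 ph G0 U01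
        by (auto simp: Am_def)
    qed
    thus ?thesis
      by (intro exI[of _ ?T3]) (use o3 z w continuous_map_eq[OF c3] in auto)
  qed
qed

end

context cons begin

lemma fzero_props: assumes "y \<in> topspace S"
  obtains e0 where "e0 \<in> fiber E p y" "fzero E p smul y = smul 0 e0"
proof -
  have "\<exists>e. e \<in> fiber E p y" using psurj assms unfolding fiber_def by (metis (mono_tags, lifting) imageE mem_Collect_eq)
  hence "(SOME e. e \<in> fiber E p y) \<in> fiber E p y" by (rule someI_ex)
  thus ?thesis using that by (simp add: fzero_def)
qed

lemma fiber_add: "e \<in> fiber E p y \<Longrightarrow> e' \<in> fiber E p y \<Longrightarrow> vadd e e' \<in> fiber E p y"
  using vadd_in by (auto simp: fiber_def)
lemma fiber_sm: "e \<in> fiber E p y \<Longrightarrow> smul a e \<in> fiber E p y"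
  using smul_in by (auto simp: fiber_def)

lemma chart1: assumes y: "y \<in> U1"
  shows "lchart (fiber E p y) vadd smul (fzero E p smul y) m (\<lambda>e. snd (h e))"
proof -
  obtain e0 where e0: "e0 \<in> fiber E p y" "fzero E p smul y = smul 0 e0"
    using fzero_props y U1S by blast
  show ?thesis
  proof
    show "fzero E p smul y \<in> fiber E p y" using e0 fiber_sm by simp
    show "snd (h (vadd e e')) = (\<lambda>i. snd (h e) i + snd (h e') i)"
      if "e \<in> fiber E p y" "e' \<in> fiber E p y" for e e' using that hadd y by (auto simp: fiber_def)
    show "snd (h (smul a e)) = (\<lambda>i. a * snd (h e) i)" if "e \<in> fiber E p y" for a e
      using that hsm y by (auto simp: fiber_def)
    show "snd (h (fzero E p smul y)) = (\<lambda>i. 0)" using e0 hsm y by (auto simp: fiber_def)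
    show "bij_betw (\<lambda>e. snd (h e)) (fiber E p y) (fspace m)"
    proof (rule bij_betw_imageI)
      show "inj_on (\<lambda>e. snd (h e)) (fiber E p y)"
        using y by (auto simp: inj_on_def fiber_def intro: h_inj)
      show "(\<lambda>e. snd (h e)) ` fiber E p y = fspace m"
      proof
        show "(\<lambda>e. snd (h e)) ` fiber E p y \<subseteq> fspace m" using h1 y by (auto simp: fiber_def)
        show "fspace m \<subseteq> (\<lambda>e. snd (h e)) ` fiber E p y"
        proof
          fix v assume "v \<in> fspace m"
          thus "v \<in> (\<lambda>e. snd (h e)) ` fiber E p y"
            using k1[OF y \<open>v \<in> fspace m\<close>] by (auto simp: fiber_def image_iff intro!: exI[of _ "k (y,v)"])
        qed
      qed
    qed
  qed (auto intro: fiber_add fiber_sm)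
qed

lemma cnj_fspace: "w \<in> fspace m \<Longrightarrow> (\<lambda>i. cnj (w i)) \<in> fspace m"
  by (auto simp: fspace_def)

lemma chart2: assumes y: "y \<in> topspace S" "\<sigma> y \<in> U1"
  shows "lchart (fiber E p y) vadd smul (fzero E p smul y) m (\<lambda>e i. cnj (snd (h (\<phi> e)) i))"
proof -
  obtain e0 where e0: "e0 \<in> fiber E p y" "fzero E p smul y = smul 0 e0"
    using fzero_props y by blast
  have phf: "\<phi> e \<in> topspace E \<and> p (\<phi> e) = \<sigma> y" if "e \<in> fiber E p y" for e
    using that phi_in phip by (auto simp: fiber_def)
  show ?thesis
  proof
    show "fzero E p smul y \<in> fiber E p y" using e0 fiber_sm by simp
    show "(\<lambda>i. cnj (snd (h (\<phi> (vadd e e'))) i)) = (\<lambda>i. cnj (snd (h (\<phi> e)) i) + cnj (snd (h (\<phi> e')) i))"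
      if "e \<in> fiber E p y" "e' \<in> fiber E p y" for e e'
      using that hadd phiadd phf y by (auto simp: fiber_def)
    show "(\<lambda>i. cnj (snd (h (\<phi> (smul a e))) i)) = (\<lambda>i. a * cnj (snd (h (\<phi> e)) i))"
      if "e \<in> fiber E p y" for a e
      using that hsm phism phf y by (auto simp: fiber_def)
    show "(\<lambda>i. cnj (snd (h (\<phi> (fzero E p smul y))) i)) = (\<lambda>i. 0)"
      using e0 hsm phism phf y by (auto simp: fiber_def)
    show "bij_betw (\<lambda>e i. cnj (snd (h (\<phi> e)) i)) (fiber E p y) (fspace m)"
    proof (rule bij_betw_imageI)
      show "inj_on (\<lambda>e i. cnj (snd (h (\<phi> e)) i)) (fiber E p y)"
      proof (rule inj_onI)
        fix e e' assume ee: "e \<in> fiber E p y" "e' \<in> fiber E p y"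
          "(\<lambda>i. cnj (snd (h (\<phi> e)) i)) = (\<lambda>i. cnj (snd (h (\<phi> e')) i))"
        hence "snd (h (\<phi> e)) = snd (h (\<phi> e'))" by (simp add: fun_eq_iff)
        hence "\<phi> e = \<phi> e'" using phf[OF ee(1)] phf[OF ee(2)] y by (intro h_inj) auto
        moreover have "\<phi> (\<phi> e) = e" "\<phi> (\<phi> e') = e'" using ee(1,2) phip by (auto simp: fiber_def)
        ultimately show "e = e'" by metis
      qed
      show "(\<lambda>e i. cnj (snd (h (\<phi> e)) i)) ` fiber E p y = fspace m"
      proof
        show "(\<lambda>e i. cnj (snd (h (\<phi> e)) i)) ` fiber E p y \<subseteq> fspace m"
          using h1 phf y by (auto intro!: cnj_fspace)
        show "fspace m \<subseteq> (\<lambda>e i. cnj (snd (h (\<phi> e)) i)) ` fiber E p y"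
        proof
          fix v assume v: "v \<in> fspace m"
          let ?e = "\<phi> (k (\<sigma> y, \<lambda>i. cnj (v i)))"
          have kk: "k (\<sigma> y, \<lambda>i. cnj (v i)) \<in> topspace E" "p (k (\<sigma> y, \<lambda>i. cnj (v i))) = \<sigma> y"
            "snd (h (k (\<sigma> y, \<lambda>i. cnj (v i)))) = (\<lambda>i. cnj (v i))"
            using k1[OF y(2) cnj_fspace[OF v]] by auto
          have "?e \<in> fiber E p y" using kk phi_in phip sigsig y by (auto simp: fiber_def)
          moreover have "\<phi> ?e = k (\<sigma> y, \<lambda>i. cnj (v i))" using kk phip by auto
          ultimately show "v \<in> (\<lambda>e i. cnj (snd (h (\<phi> e)) i)) ` fiber E p y"
            using kk by (auto simp: image_iff intro!: bexI[of _ ?e])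
        qed
      qed
    qed
  qed (auto intro: fiber_add fiber_sm)
qed

lemma tf_in: "y \<in> topspace S \<Longrightarrow> t \<in> {0..1} \<Longrightarrow> t * f y \<in> {0..1}"
proof -
  assume "y \<in> topspace S" "t \<in> {0..1}"
  moreover hence "f y \<in> {0..1}" using continuous_map_image_subset_topspace[OF fc] by auto
  ultimately show ?thesis by (auto intro: mult_le_one)
qed

lemma Am_SL:
  assumes y: "y \<in> topspace S" and b: "fiber_basis E p vadd smul y n b"
    and P: "\<forall>e\<in>topspace E. P e \<in> topspace E \<and> p (P e) = p e"
    and Padd: "\<forall>e\<in>topspace E. \<forall>e'\<in>topspace E. p e = p e' \<longrightarrow> P (vadd e e') = vadd (P e) (P e')"
    and Psm: "\<forall>e\<in>topspace E. \<forall>a. P (smul a e) = smul a (P e)"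
    and Gd: "\<And>s. s \<in> {0..1} \<Longrightarrow> detn m (G s) = 1" and t: "t \<in> {0..1}"
  shows "detn n (\<lambda>i j. coords E p vadd smul y n b (P (Am G t (b j))) i)
       = detn n (\<lambda>i j. coords E p vadd smul y n b (P (b j)) i)"
proof -
  have bV: "\<And>j. j < n \<Longrightarrow> b j \<in> fiber E p y" using b by (simp add: fiber_basis_def)
  have PV: "\<And>v. v \<in> fiber E p y \<Longrightarrow> P v \<in> fiber E p y" using P by (auto simp: fiber_def)
  have Padd': "\<And>e e'. e \<in> fiber E p y \<Longrightarrow> e' \<in> fiber E p y \<Longrightarrow> P (vadd e e') = vadd (P e) (P e')"
    using Padd by (auto simp: fiber_def)
  have Psm': "\<And>a e. e \<in> fiber E p y \<Longrightarrow> P (smul a e) = smul a (P e)" using Psm by (auto simp: fiber_def)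
  have AV: "\<And>v. v \<in> fiber E p y \<Longrightarrow> Am G t v \<in> fiber E p y" using Am_in by (auto simp: fiber_def)
  consider "y \<in> U0" | "y \<notin> U0" "\<sigma> y \<in> U0" | "y \<notin> U0" "\<sigma> y \<notin> U0" by blast
  thus ?thesis
  proof cases
    case 1
    interpret C: lchart "fiber E p y" vadd smul "fzero E p smul y" m "\<lambda>e. snd (h e)"
      using chart1 1 U01 by auto
    have lc: "C.lc n c b = lincomb E p vadd smul y n c b" for c by (simp add: C.lc_def lincomb_def)
    have crd: "C.crd n b v = coords E p vadd smul y n b v" for v by (simp add: C.crd_def coords_def lc)
    have bu: "\<And>v. v \<in> fiber E p y \<Longrightarrow> \<exists>!c. c \<in> fspace n \<and> v = C.lc n c b"
      using b by (simp add: fiber_basis_def lc)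
    have AH: "snd (h (Am G t v)) = mv m (G (t * f y)) (snd (h v))" if "v \<in> fiber E p y" for v
      using that act_props[of v G t] 1 U01 by (auto simp: fiber_def Am_def)
    show ?thesis using C.det_comp[OF bV bu PV Padd' Psm' AV AH Gd[OF tf_in[OF y t]]]
      by (simp add: crd)
  next
    case 2
    interpret C: lchart "fiber E p y" vadd smul "fzero E p smul y" m "\<lambda>e i. cnj (snd (h (\<phi> e)) i)"
      using chart2 2 U01 y by auto
    have lc: "C.lc n c b = lincomb E p vadd smul y n c b" for c by (simp add: C.lc_def lincomb_def)
    have crd: "C.crd n b v = coords E p vadd smul y n b v" for v by (simp add: C.crd_def coords_def lc)
    have bu: "\<And>v. v \<in> fiber E p y \<Longrightarrow> \<exists>!c. c \<in> fspace n \<and> v = C.lc n c b"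
      using b by (simp add: fiber_basis_def lc)
    have AH: "(\<lambda>i. cnj (snd (h (\<phi> (Am G t v))) i)) =
        mv m (\<lambda>i j. cnj (G (t * f (\<sigma> y)) i j)) (\<lambda>i. cnj (snd (h (\<phi> v)) i))" if v: "v \<in> fiber E p y" for v
    proof -
      have ph: "\<phi> v \<in> topspace E" "p (\<phi> v) = \<sigma> y" using v phi_in phip by (auto simp: fiber_def)
      have "Am G t v = \<phi> (act G t (\<phi> v))" using v 2 by (auto simp: fiber_def Am_def)
      moreover have "\<phi> (\<phi> (act G t (\<phi> v))) = act G t (\<phi> v)" using act_props[OF ph(1)] ph 2 U01 phip by auto
      ultimately have "snd (h (\<phi> (Am G t v))) = mv m (G (t * f (\<sigma> y))) (snd (h (\<phi> v)))"
        using act_props[OF ph(1)] ph 2 U01 by auto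
      thus ?thesis by (simp add: mv_cnj)
    qed
    have H1: "detn m (\<lambda>i j. cnj (G (t * f (\<sigma> y)) i j)) = 1"
      using Gd[OF tf_in[OF sig_in[OF y] t]] by (simp add: detn_cnj)
    show ?thesis using C.det_comp[OF bV bu PV Padd' Psm' AV AH H1]
      by (simp add: crd)
  next
    case 3
    have "Am G t (b j) = b j" if "j < n" for j using bV[OF that] 3 by (auto simp: fiber_def Am_def)
    thus ?thesis by (intro detn_cong) simp
  qed
qed

end

lemma mv_uvec: "i < m \<Longrightarrow> j < m \<Longrightarrow> mv m A (uvec j) i = A i j"
  using sum_uvec[of j m "\<lambda>k. A i k"] by (simp add: mv_def mult.commute)

lemma matrix_path_ex:
  assumes "detn m N \<noteq> 0"
  shows "\<exists>\<gamma> :: real \<Rightarrow> nat \<Rightarrow> nat \<Rightarrow> complex.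
     (\<forall>i<m. \<forall>j<m. continuous_on {0..1} (\<lambda>s. \<gamma> s i j)) \<and> (\<forall>i<m. \<forall>j<m. \<gamma> 0 i j = idm i j) \<and>
      (\<forall>i<m. \<forall>j<m. \<gamma> 1 i j = N i j) \<and> (\<forall>s\<in>{0..1}. detn m (\<gamma> s) \<noteq> 0) \<and>
      (detn m N = 1 \<longrightarrow> (\<forall>s\<in>{0..1}. detn m (\<gamma> s) = 1))"
proof (rule matrix_path[OF assms])
  fix \<gamma> :: "real \<Rightarrow> nat \<Rightarrow> nat \<Rightarrow> complex"
  assume "\<And>i j. i < m \<Longrightarrow> j < m \<Longrightarrow> continuous_on {0..1} (\<lambda>s. \<gamma> s i j)"
    "\<And>i j. i < m \<Longrightarrow> j < m \<Longrightarrow> \<gamma> 0 i j = idm i j"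
    "\<And>i j. i < m \<Longrightarrow> j < m \<Longrightarrow> \<gamma> 1 i j = N i j"
    "\<And>s. s \<in> {0..1} \<Longrightarrow> detn m (\<gamma> s) \<noteq> 0"
    "detn m N = 1 \<Longrightarrow> (\<And>s. s \<in> {0..1} \<Longrightarrow> detn m (\<gamma> s) = 1)"
  thus ?thesis by (intro exI[of _ \<gamma>]) auto
qed

context cons begin

lemma main_GL:
  assumes x: "x \<in> U0" and fx: "f x = 1" and Psi: "\<Psi> \<in> GL_pair E p vadd smul \<phi>"
  shows "\<exists>\<Psi>t. bundle_path E (GL_pair E p vadd smul \<phi>) \<Psi>t \<and>
     (\<Psi> \<in> SL_pair S E p vadd smul \<phi> \<longrightarrow> bundle_path E (SL_pair S E p vadd smul \<phi>) \<Psi>t) \<and>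
     (\<forall>e \<in> topspace E. \<Psi>t 0 e = \<Psi> e) \<and>
     (\<forall>e \<in> fiber E p x. \<Psi>t 1 e = e) \<and>
     (\<forall>t \<in> {0..1}. \<forall>e \<in> topspace E. p e \<notin> U0 \<and> \<sigma> (p e) \<notin> U0 \<longrightarrow> \<Psi>t t e = \<Psi> e)"
proof -
  have Ph: "homeomorphic_map E E \<Psi>"
    and Pp: "\<forall>e\<in>topspace E. p (\<Psi> e) = p e \<and> \<Psi> (\<phi> e) = \<phi> (\<Psi> e)"
    and Padd: "\<forall>e\<in>topspace E. \<forall>e'\<in>topspace E. p e = p e' \<longrightarrow> \<Psi> (vadd e e') = vadd (\<Psi> e) (\<Psi> e')"
    and Psm: "\<forall>e\<in>topspace E. \<forall>a. \<Psi> (smul a e) = smul a (\<Psi> e)"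
    using Psi by (auto simp: GL_pair_def)
  obtain \<Psi>' where hm: "homeomorphic_maps E E \<Psi> \<Psi>'" using Ph homeomorphic_map_maps by blast
  have Pin: "\<Psi> e \<in> topspace E" if "e \<in> topspace E" for e
    using hm that unfolding homeomorphic_maps_def by (meson continuous_map_def funcset_mem)
  have P'in: "\<Psi>' e \<in> topspace E" if "e \<in> topspace E" for e
    using hm that unfolding homeomorphic_maps_def by (meson continuous_map_def funcset_mem)
  have PP': "\<Psi> (\<Psi>' e) = e" "\<Psi>' (\<Psi> e) = e" if "e \<in> topspace E" for e
    using hm that unfolding homeomorphic_maps_def by auto
  have P'p: "p (\<Psi>' e) = p e" if "e \<in> topspace E" for e
    using Pp P'in[OF that] PP'[OF that] by metis
  have Pinj: "e = e'" if "e \<in> topspace E" "e' \<in> topspace E" "\<Psi> e = \<Psi> e'" for e e'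
    using PP' that by metis
  have P'add: "\<Psi>' (vadd e e') = vadd (\<Psi>' e) (\<Psi>' e')" if "e \<in> topspace E" "e' \<in> topspace E" "p e = p e'" for e e'
  proof (rule Pinj)
    show "\<Psi>' (vadd e e') \<in> topspace E" using P'in vadd_in that by auto
    show "vadd (\<Psi>' e) (\<Psi>' e') \<in> topspace E" using P'in vadd_in that P'p by auto
    show "\<Psi> (\<Psi>' (vadd e e')) = \<Psi> (vadd (\<Psi>' e) (\<Psi>' e'))"
      using PP' Padd P'in P'p that vadd_in by auto
  qed
  have P'sm: "\<Psi>' (smul a e) = smul a (\<Psi>' e)" if "e \<in> topspace E" for a e
  proof (rule Pinj)
    show "\<Psi>' (smul a e) \<in> topspace E" using P'in smul_in that by auto
    show "smul a (\<Psi>' e) \<in> topspace E" using P'in smul_in that by auto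
    show "\<Psi> (\<Psi>' (smul a e)) = \<Psi> (smul a (\<Psi>' e))"
      using PP' Psm P'in that smul_in by auto
  qed
  have xU1: "x \<in> U1" using x U01 by auto
  interpret C: lchart "fiber E p x" vadd smul "fzero E p smul x" m "\<lambda>e. snd (h e)"
    by (rule chart1[OF xU1])
  have tik: "C.ti w = k (x, w)" if "w \<in> fspace m" for w
  proof -
    have kf: "k (x,w) \<in> fiber E p x" using k1[OF xU1 that] by (auto simp: fiber_def)
    show ?thesis by (rule C.tau_inj[OF C.ti_in[OF that] kf]) (simp add: C.tau_ti[OF that] k1[OF xU1 that])
  qed
  define N where "N = (\<lambda>i j. snd (h (\<Psi>' (k (x, uvec j)))) i)"
  define GP where "GP = (\<lambda>i j. snd (h (\<Psi> (k (x, uvec j)))) i)"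
  have fibx: "\<And>v. v \<in> fiber E p x \<Longrightarrow> v \<in> topspace E \<and> p v = x" by (auto simp: fiber_def)
  have P'V: "\<And>v. v \<in> fiber E p x \<Longrightarrow> \<Psi>' v \<in> fiber E p x" using P'in P'p by (auto simp: fiber_def)
  have PV: "\<And>v. v \<in> fiber E p x \<Longrightarrow> \<Psi> v \<in> fiber E p x" using Pin Pp by (auto simp: fiber_def)
  have NH: "snd (h (\<Psi>' v)) = mv m N (snd (h v))" if "v \<in> fiber E p x" for v
  proof -
    have "snd (h (\<Psi>' v)) = mv m (\<lambda>i j. snd (h (\<Psi>' (C.ti (uvec j)))) i) (snd (h v))"
      by (rule C.lin_chart[OF P'V]) (use P'add P'sm fibx that in auto)
    also have "\<dots> = mv m N (snd (h v))" by (rule mv_cong) (simp add: N_def tik uvec_in)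
    finally show ?thesis .
  qed
  have GH: "snd (h (\<Psi> v)) = mv m GP (snd (h v))" if "v \<in> fiber E p x" for v
  proof -
    have "snd (h (\<Psi> v)) = mv m (\<lambda>i j. snd (h (\<Psi> (C.ti (uvec j)))) i) (snd (h v))"
      by (rule C.lin_chart[OF PV]) (use Padd Psm fibx that in auto)
    also have "\<dots> = mv m GP (snd (h v))" by (rule mv_cong) (simp add: GP_def tik uvec_in)
    finally show ?thesis .
  qed
  have GPN: "mm m GP N i j = idm i j" if "i < m" "j < m" for i j
  proof -
    have kv: "k (x, uvec j) \<in> fiber E p x" "snd (h (k (x, uvec j))) = uvec j"
      using k1[OF xU1 uvec_in[OF that(2)]] by (auto simp: fiber_def)
    have "uvec j = snd (h (\<Psi> (\<Psi>' (k (x, uvec j)))))" using PP' kv by (auto simp: fiber_def)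
    also have "\<dots> = mv m (mm m GP N) (uvec j)" using GH[OF P'V[OF kv(1)]] NH[OF kv(1)] kv by (simp add: mv_mv)
    finally have "mv m (mm m GP N) (uvec j) i = uvec j i" by simp
    thus ?thesis using that mv_uvec[OF that, of "mm m GP N"] by (simp add: uvec_def idm_def)
  qed
  have dGN: "detn m GP * detn m N = 1"
  proof -
    have "detn m (mm m GP N) = detn m idm" by (rule detn_cong) (rule GPN)
    thus ?thesis by (simp add: detn_mm)
  qed
  hence dN: "detn m N \<noteq> 0" by auto
  have dN1: "detn m N = 1" if SL: "\<Psi> \<in> SL_pair S E p vadd smul \<phi>"
  proof -
    define b0 where "b0 = (\<lambda>j. C.ti (uvec j))"
    have lc: "C.lc n c b = lincomb E p vadd smul x n c b" for n c b by (simp add: C.lc_def lincomb_def)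
    have crd: "C.crd n b v = coords E p vadd smul x n b v" for n b v by (simp add: C.crd_def coords_def lc)
    have fb: "fiber_basis E p vadd smul x m b0"
      using C.chart_basis by (simp add: fiber_basis_def b0_def lc)
    have "detn m (\<lambda>i j. coords E p vadd smul x m b0 (\<Psi> (b0 j)) i) = 1"
      using SL fb xU1 U1S by (auto simp: SL_pair_def)
    moreover have "detn m (\<lambda>i j. C.crd m b0 (\<Psi> (b0 j)) i) = detn m GP"
      by (rule C.det_basis) (use C.chart_basis PV GH in \<open>auto simp: b0_def\<close>)
    ultimately show ?thesis using dGN by (simp add: crd)
  qed
  obtain \<gamma> :: "real \<Rightarrow> nat \<Rightarrow> nat \<Rightarrow> complex" where gall:
     "(\<forall>i<m. \<forall>j<m. continuous_on {0..1} (\<lambda>s. \<gamma> s i j)) \<and> (\<forall>i<m. \<forall>j<m. \<gamma> 0 i j = idm i j) \<and>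
      (\<forall>i<m. \<forall>j<m. \<gamma> 1 i j = N i j) \<and> (\<forall>s\<in>{0..1}. detn m (\<gamma> s) \<noteq> 0) \<and>
      (detn m N = 1 \<longrightarrow> (\<forall>s\<in>{0..1}. detn m (\<gamma> s) = 1))"
    using matrix_path_ex[OF dN] by blast
  have gc: "\<And>i j. i < m \<Longrightarrow> j < m \<Longrightarrow> continuous_on {0..1} (\<lambda>s. \<gamma> s i j)"
    and g0: "\<And>i j. i < m \<Longrightarrow> j < m \<Longrightarrow> \<gamma> 0 i j = idm i j"
    and g1: "\<And>i j. i < m \<Longrightarrow> j < m \<Longrightarrow> \<gamma> 1 i j = N i j"
    and gd: "\<And>s. s \<in> {0..1} \<Longrightarrow> detn m (\<gamma> s) \<noteq> 0"
    and gd1: "detn m N = 1 \<Longrightarrow> (\<And>s. s \<in> {0..1} \<Longrightarrow> detn m (\<gamma> s) = 1)"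
    using gall by auto
  define \<delta> where "\<delta> = (\<lambda>s. invm m (\<gamma> s))"
  have dc: "\<And>i j. i < m \<Longrightarrow> j < m \<Longrightarrow> continuous_on {0..1} (\<lambda>s. \<delta> s i j)"
    unfolding \<delta>_def by (rule cont_invm[OF gc gd])
  have gdel: "mm m (\<gamma> s) (\<delta> s) i j = idm i j" "mm m (\<delta> s) (\<gamma> s) i j = idm i j"
    if "s \<in> {0..1}" "i < m" "j < m" for s i j
    using invm_right[OF gd[OF that(1)] that(2,3)] invm_left[OF gd[OF that(1)] that(2,3)]
    by (auto simp: \<delta>_def)
  have d0: "\<delta> 0 i j = idm i j" if "i < m" "j < m" for i j
  proof -
    have "mm m (\<gamma> 0) (\<delta> 0) i j = (\<Sum>l<m. idm i l * \<delta> 0 l j)"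
      by (auto simp: mm_def g0 that intro!: sum.cong)
    also have "\<dots> = \<delta> 0 i j" using sum_uvec[OF that(1), of "\<lambda>l. \<delta> 0 l j"] by (simp add: uvec_def idm_def eq_commute)
    finally show ?thesis using gdel(1)[of 0 i j] that by simp
  qed
  define \<Psi>t where "\<Psi>t = (\<lambda>t e. \<Psi> (Am \<gamma> t e))"
  have Acont: "continuous_map XX E (\<lambda>z. Am \<gamma> (fst z) (snd z))" by (rule Am_cont[OF gc g0])
  have Bcont: "continuous_map XX E (\<lambda>z. Am \<delta> (fst z) (snd z))" by (rule Am_cont[OF dc d0])
  have slice: "continuous_map E XX (\<lambda>e. (t, e))" if "t \<in> {0..1}" for t :: real
    using that by (intro continuous_map_pairedI continuous_map_id) auto
  have Ahom: "homeomorphic_map E E (Am \<gamma> t)" if t: "t \<in> {0..1}" for t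
  proof -
    have "homeomorphic_maps E E (Am \<gamma> t) (Am \<delta> t)"
      unfolding homeomorphic_maps_def
    proof (intro conjI ballI)
      show "continuous_map E E (Am \<gamma> t)"
        using continuous_map_compose[OF slice[OF t] Acont] by (simp add: o_def)
      show "continuous_map E E (Am \<delta> t)"
        using continuous_map_compose[OF slice[OF t] Bcont] by (simp add: o_def)
      show "Am \<delta> t (Am \<gamma> t e) = e" if "e \<in> topspace E" for e using Am_inv[OF that _ t] gdel by blast
      show "Am \<gamma> t (Am \<delta> t e) = e" if "e \<in> topspace E" for e using Am_inv[OF that _ t] gdel by blast
    qed
    thus ?thesis using homeomorphic_map_maps by blast
  qed
  have GL: "\<Psi>t t \<in> GL_pair E p vadd smul \<phi>" if t: "t \<in> {0..1}" for t
    unfolding GL_pair_def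
  proof (intro CollectI conjI ballI allI impI)
    show "homeomorphic_map E E (\<Psi>t t)"
      using homeomorphic_map_compose[OF Ahom[OF t] Ph] by (simp add: \<Psi>t_def o_def)
    fix e assume e: "e \<in> topspace E"
    show "p (\<Psi>t t e) = p e" using Pp Am_in[OF e] by (simp add: \<Psi>t_def)
    show "\<Psi>t t (\<phi> e) = \<phi> (\<Psi>t t e)" using Pp Am_in[OF e] by (simp add: \<Psi>t_def Am_phi[OF e])
    show "\<Psi>t t (smul a e) = smul a (\<Psi>t t e)" for a using Psm Am_in[OF e] by (simp add: \<Psi>t_def Am_sm[OF e])
    fix e' assume e': "e' \<in> topspace E" and pe: "p e = p e'"
    show "\<Psi>t t (vadd e e') = vadd (\<Psi>t t e) (\<Psi>t t e')"
      using Padd Am_in[OF e] Am_in[OF e'] pe by (simp add: \<Psi>t_def Am_add[OF e e' pe])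
  qed
  have cont: "continuous_map (prod_topology (top_of_set {0..1}) E) E (\<lambda>(t, e). \<Psi>t t e)"
    using continuous_map_compose[OF Acont homeomorphic_imp_continuous_map[OF Ph]]
    by (simp add: o_def \<Psi>t_def case_prod_unfold)
  show ?thesis
  proof (intro exI[of _ \<Psi>t] conjI impI ballI)
    show "bundle_path E (GL_pair E p vadd smul \<phi>) \<Psi>t" using GL cont by (simp add: bundle_path_def)
    show "bundle_path E (SL_pair S E p vadd smul \<phi>) \<Psi>t" if SL: "\<Psi> \<in> SL_pair S E p vadd smul \<phi>"
    proof -
      have SL': "\<forall>y\<in>topspace S. \<forall>n b. fiber_basis E p vadd smul y n b \<longrightarrow>
          detn n (\<lambda>i j. coords E p vadd smul y n b (\<Psi> (b j)) i) = 1" using SL by (simp add: SL_pair_def)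
      have "\<Psi>t t \<in> SL_pair S E p vadd smul \<phi>" if t: "t \<in> {0..1}" for t
        unfolding SL_pair_def
      proof (intro CollectI conjI GL[OF t] ballI allI impI)
        fix y n b assume y: "y \<in> topspace S" and b: "fiber_basis E p vadd smul y n b"
        show "detn n (\<lambda>i j. coords E p vadd smul y n b (\<Psi>t t (b j)) i) = 1"
          using Am_SL[OF y b _ Padd Psm gd1[OF dN1[OF SL]] t] Pp Pin SL' y b by (simp add: \<Psi>t_def)
      qed
      thus ?thesis using cont by (simp add: bundle_path_def)
    qed
    show "\<Psi>t 0 e = \<Psi> e" if "e \<in> topspace E" for e using Am_id0[of e \<gamma>, OF that g0] by (simp add: \<Psi>t_def)
    show "\<Psi>t 1 e = e" if e: "e \<in> fiber E p x" for e
    proof -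
      have ee: "e \<in> topspace E" "p e = x" using e by (auto simp: fiber_def)
      have "Am \<gamma> 1 e = k (x, mv m (\<gamma> 1) (snd (h e)))" using ee x fx by (simp add: Am_def act_def)
      also have "mv m (\<gamma> 1) (snd (h e)) = mv m N (snd (h e))" by (rule mv_cong) (rule g1)
      also have "\<dots> = snd (h (\<Psi>' e))" using NH[OF e] by simp
      also have "k (x, snd (h (\<Psi>' e))) = \<Psi>' e" using h1[OF P'in[OF ee(1)]] P'p[OF ee(1)] ee xU1 by simp
      finally show ?thesis using PP'[OF ee(1)] by (simp add: \<Psi>t_def)
    qed
    fix t :: real and e assume "t \<in> {0..1}" "e \<in> topspace E" "p e \<notin> U0 \<and> \<sigma> (p e) \<notin> U0"
    thus "\<Psi>t t e = \<Psi> e" by (simp add: \<Psi>t_def Am_def)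
  qed
qed

end

theorem lemma5p2:
  fixes S :: "'a topology" and ori :: "'a \<Rightarrow> 'a chain set" and \<sigma> :: "'a \<Rightarrow> 'a"
    and E :: "'b topology" and p :: "'b \<Rightarrow> 'a" and vadd :: "'b \<Rightarrow> 'b \<Rightarrow> 'b"
    and smul :: "complex \<Rightarrow> 'b \<Rightarrow> 'b" and \<phi> :: "'b \<Rightarrow> 'b"
    and x :: 'a and U :: "'a set" and \<Psi> :: "'b \<Rightarrow> 'b"
  assumes "symmetric_surface S ori \<sigma>"
    and "real_bundle_pair S \<sigma> E p vadd smul \<phi>"
    and "x \<in> topspace S - fixed_locus S \<sigma>"
    and "openin S U" and "x \<in> U"
  shows "(\<Psi> \<in> SL_pair S E p vadd smul \<phi> \<longrightarrow>
            (\<exists>\<Psi>t. bundle_path E (SL_pair S E p vadd smul \<phi>) \<Psi>t \<and>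
                (\<forall>e \<in> topspace E. \<Psi>t 0 e = \<Psi> e) \<and>
                (\<forall>e \<in> fiber E p x. \<Psi>t 1 e = e) \<and>
                (\<forall>t \<in> {0..1}. \<forall>e \<in> topspace E. p e \<notin> U \<union> \<sigma> ` U \<longrightarrow> \<Psi>t t e = \<Psi> e)))
       \<and> (\<Psi> \<in> GL_pair E p vadd smul \<phi> \<longrightarrow>
            (\<exists>\<Psi>t. bundle_path E (GL_pair E p vadd smul \<phi>) \<Psi>t \<and>
                (\<forall>e \<in> topspace E. \<Psi>t 0 e = \<Psi> e) \<and>
                (\<forall>e \<in> fiber E p x. \<Psi>t 1 e = e) \<and>
                (\<forall>t \<in> {0..1}. \<forall>e \<in> topspace E. p e \<notin> U \<union> \<sigma> ` U \<longrightarrow> \<Psi>t t e = \<Psi> e)))"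
proof -
  have cpt: "compact_space S" and hd: "Hausdorff_space S" and sigc: "continuous_map S S \<sigma>"
    and sigsig: "\<forall>y\<in>topspace S. \<sigma> (\<sigma> y) = y"
    using assms(1) by (auto simp: symmetric_surface_def nodal_surface_def)
  have cvb: "complex_vector_bundle S E p vadd smul" and phic: "continuous_map E E \<phi>"
    and phip: "\<forall>e\<in>topspace E. p (\<phi> e) = \<sigma> (p e) \<and> \<phi> (\<phi> e) = e"
    and phiadd: "\<forall>e\<in>topspace E. \<forall>e'\<in>topspace E. p e = p e' \<longrightarrow> \<phi> (vadd e e') = vadd (\<phi> e) (\<phi> e')"
    and phism: "\<forall>e\<in>topspace E. \<forall>a. \<phi> (smul a e) = smul (cnj a) (\<phi> e)"
    using assms(2) by (auto simp: real_bundle_pair_def)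
  have pc: "continuous_map E S p" and psurj: "p ` topspace E = topspace S"
    and vadd_in: "\<forall>e\<in>topspace E. \<forall>e'\<in>topspace E. p e = p e' \<longrightarrow> vadd e e' \<in> topspace E \<and> p (vadd e e') = p e"
    and smul_in: "\<forall>e\<in>topspace E. \<forall>a. smul a e \<in> topspace E \<and> p (smul a e) = p e"
    and triv: "\<forall>x \<in> topspace S. \<exists>U n h. openin S U \<and> x \<in> U \<and>
        homeomorphic_map (subtopology E {e \<in> topspace E. p e \<in> U})
                         (prod_topology (subtopology S U) (top_of_set (fspace n))) h \<and>
        (\<forall>e \<in> topspace E. p e \<in> U \<longrightarrow> fst (h e) = p e) \<and>
        (\<forall>e \<in> topspace E. \<forall>e' \<in> topspace E. p e \<in> U \<and> p e = p e' \<longrightarrow>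
            snd (h (vadd e e')) = (\<lambda>i. snd (h e) i + snd (h e') i)) \<and>
        (\<forall>e \<in> topspace E. \<forall>a. p e \<in> U \<longrightarrow>
            snd (h (smul a e)) = (\<lambda>i. a * snd (h e) i))"
    using cvb unfolding complex_vector_bundle_def by blast+
  have xS: "x \<in> topspace S" and sx: "\<sigma> x \<noteq> x" using assms(3) by (auto simp: fixed_locus_def)
  obtain U1 m h where U1: "openin S U1" "x \<in> U1"
    and hh: "homeomorphic_map (subtopology E {e \<in> topspace E. p e \<in> U1})
                         (prod_topology (subtopology S U1) (top_of_set (fspace m))) h"
    and hfst: "\<forall>e \<in> topspace E. p e \<in> U1 \<longrightarrow> fst (h e) = p e"
    and hadd: "\<forall>e \<in> topspace E. \<forall>e' \<in> topspace E. p e \<in> U1 \<and> p e = p e' \<longrightarrow>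
            snd (h (vadd e e')) = (\<lambda>i. snd (h e) i + snd (h e') i)"
    and hsm: "\<forall>e \<in> topspace E. \<forall>a. p e \<in> U1 \<longrightarrow> snd (h (smul a e)) = (\<lambda>i. a * snd (h e) i)"
    using bspec[OF triv xS] by (elim exE conjE) (rule that; assumption)
  obtain k where hk: "homeomorphic_maps (subtopology E {e \<in> topspace E. p e \<in> U1})
                         (prod_topology (subtopology S U1) (top_of_set (fspace m))) h k"
    using hh homeomorphic_map_maps by blast
  have sxS: "\<sigma> x \<in> topspace S" using sigc xS by (meson continuous_map_def funcset_mem)
  obtain W1 W2 where W12: "openin S W1" "openin S W2" "x \<in> W1" "\<sigma> x \<in> W2" "disjnt W1 W2"
    using hd xS sxS sx unfolding Hausdorff_space_def by metis
  define U0 where "U0 = U \<inter> U1 \<inter> W1 \<inter> {y \<in> topspace S. \<sigma> y \<in> W2}"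
  have U0o: "openin S U0" unfolding U0_def
    by (intro openin_Int assms(4) U1(1) W12(1) openin_continuous_map_preimage[OF sigc W12(2)])
  have xU0: "x \<in> U0" using assms(5) U1 W12 xS by (auto simp: U0_def)
  have U01: "U0 \<subseteq> U1" and U0U: "U0 \<subseteq> U" by (auto simp: U0_def)
  have U0sig: "\<forall>y\<in>U0. \<sigma> y \<notin> U0" using W12(5) by (auto simp: U0_def disjnt_def)
  have U0S: "U0 \<subseteq> topspace S" using U0o by (rule openin_subset)
  have ns: "normal_space S" using cpt hd by (simp add: compact_Hausdorff_or_regular_imp_normal_space)
  have c1: "closedin S (topspace S - U0)" using U0o by (simp add: closedin_diff)
  have c2: "closedin S {x}" using closedin_t1_singleton[OF Hausdorff_imp_t1_space[OF hd] xS] .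
  have dj: "disjnt (topspace S - U0) {x}" using xU0 by (auto simp: disjnt_def)
  obtain f1 :: "'a \<Rightarrow> real" where f1c: "continuous_map S (top_of_set {0..1}) f1"
    and f10: "f1 ` (topspace S - U0) \<subseteq> {0}" and f11: "f1 ` {x} \<subseteq> {1}"
    by (rule Urysohn_lemma[OF ns c1 c2 dj zero_le_one])
  have f1r: "continuous_map S euclideanreal f1" using continuous_map_into_fulltopology[OF f1c] .
  have f1in: "f1 y \<in> {0..1}" if "y \<in> topspace S" for y
    using continuous_map_image_subset_topspace[OF f1c] that by auto
  define f where "f = (\<lambda>y. max 0 (2 * f1 y - 1))"
  have fc: "continuous_map S (top_of_set {0..1}) f"
  proof (rule continuous_map_into_subtopology)
    have "continuous_on {0..1} (\<lambda>u::real. max 0 (2 * u - 1))" by (intro continuous_intros)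
    thus "continuous_map S euclideanreal f" unfolding f_def by (rule cont_on_comp[OF f1c])
    show "f \<in> topspace S \<rightarrow> {0..1}" using f1in by (force simp: f_def)
  qed
  define W where "W = {y \<in> topspace S. f1 y \<in> {..<1/2}} \<inter> {y \<in> topspace S. f1 (\<sigma> y) \<in> {..<1/2}}"
  have Wo: "openin S W" unfolding W_def
  proof (intro openin_Int openin_continuous_map_preimage[OF f1r])
    show "openin euclideanreal {..<1/2}" using open_lessThan open_openin by blast
    show "openin S {y \<in> topspace S. f1 (\<sigma> y) \<in> {..<1 / 2}}"
      using openin_continuous_map_preimage[OF continuous_map_compose[OF sigc f1r], of "{..<1/2}"]
        open_lessThan open_openin by (simp add: o_def)
  qed
  have cover: "\<forall>y\<in>topspace S. y \<in> U0 \<or> \<sigma> y \<in> U0 \<or> y \<in> W"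
  proof (intro ballI)
    fix y assume y: "y \<in> topspace S"
    have sy: "\<sigma> y \<in> topspace S" using sigc y by (meson continuous_map_def funcset_mem)
    show "y \<in> U0 \<or> \<sigma> y \<in> U0 \<or> y \<in> W"
      using f10 y sy by (auto simp: W_def)
  qed
  have Wf: "\<forall>y\<in>W. f y = 0 \<and> f (\<sigma> y) = 0" by (auto simp: W_def f_def)
  have fx: "f x = 1" using f11 by (simp add: f_def)
  interpret cons S \<sigma> E p vadd smul \<phi> U1 m h k U0 W f
    using pc psurj vadd_in smul_in U1(1) hk hfst hadd hsm phic phip phiadd phism sigc sigsig
      U0o U01 U0sig Wo cover Wf fc
    unfolding cons_def by (intro conjI) assumption+
  have out: "p e \<notin> U0 \<and> \<sigma> (p e) \<notin> U0" if "e \<in> topspace E" "p e \<notin> U \<union> \<sigma> ` U" for e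
  proof -
    have "p e \<in> topspace S" using p_in that by auto
    hence "\<sigma> (p e) \<in> U0 \<Longrightarrow> p e \<in> \<sigma> ` U"
    proof -
      assume pS: "p e \<in> topspace S" and s: "\<sigma> (p e) \<in> U0"
      have "p e = \<sigma> (\<sigma> (p e))" using sigsig pS by auto
      moreover have "\<sigma> (p e) \<in> U" using s U0U by auto
      ultimately show ?thesis by (rule image_eqI)
    qed
    thus ?thesis using that U0U by auto
  qed
  have GLcase: "\<exists>\<Psi>t. bundle_path E (GL_pair E p vadd smul \<phi>) \<Psi>t \<and>
     (\<Psi> \<in> SL_pair S E p vadd smul \<phi> \<longrightarrow> bundle_path E (SL_pair S E p vadd smul \<phi>) \<Psi>t) \<and>
     (\<forall>e \<in> topspace E. \<Psi>t 0 e = \<Psi> e) \<and>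
     (\<forall>e \<in> fiber E p x. \<Psi>t 1 e = e) \<and>
     (\<forall>t \<in> {0..1}. \<forall>e \<in> topspace E. p e \<notin> U \<union> \<sigma> ` U \<longrightarrow> \<Psi>t t e = \<Psi> e)"
    if GLP: "\<Psi> \<in> GL_pair E p vadd smul \<phi>"
  proof -
    obtain \<Psi>t where A: "bundle_path E (GL_pair E p vadd smul \<phi>) \<Psi>t"
      "\<Psi> \<in> SL_pair S E p vadd smul \<phi> \<longrightarrow> bundle_path E (SL_pair S E p vadd smul \<phi>) \<Psi>t"
      "\<forall>e \<in> topspace E. \<Psi>t 0 e = \<Psi> e" "\<forall>e \<in> fiber E p x. \<Psi>t 1 e = e"
      "\<forall>t \<in> {0..1}. \<forall>e \<in> topspace E. p e \<notin> U0 \<and> \<sigma> (p e) \<notin> U0 \<longrightarrow> \<Psi>t t e = \<Psi> e"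
      using main_GL[OF xU0 fx GLP] by blast
    have "\<forall>t \<in> {0..1}. \<forall>e \<in> topspace E. p e \<notin> U \<union> \<sigma> ` U \<longrightarrow> \<Psi>t t e = \<Psi> e"
      using A(5) out by blast
    thus ?thesis using A(1-4) by blast
  qed
  show ?thesis
  proof (intro conjI impI)
    assume "\<Psi> \<in> SL_pair S E p vadd smul \<phi>"
    moreover hence "\<Psi> \<in> GL_pair E p vadd smul \<phi>" by (simp add: SL_pair_def)
    ultimately show "\<exists>\<Psi>t. bundle_path E (SL_pair S E p vadd smul \<phi>) \<Psi>t \<and>
                (\<forall>e \<in> topspace E. \<Psi>t 0 e = \<Psi> e) \<and>
                (\<forall>e \<in> fiber E p x. \<Psi>t 1 e = e) \<and>
                (\<forall>t \<in> {0..1}. \<forall>e \<in> topspace E. p e \<notin> U \<union> \<sigma> ` U \<longrightarrow> \<Psi>t t e = \<Psi> e)"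
      using GLcase by blast
  next
    assume "\<Psi> \<in> GL_pair E p vadd smul \<phi>"
    thus "\<exists>\<Psi>t. bundle_path E (GL_pair E p vadd smul \<phi>) \<Psi>t \<and>
                (\<forall>e \<in> topspace E. \<Psi>t 0 e = \<Psi> e) \<and>
                (\<forall>e \<in> fiber E p x. \<Psi>t 1 e = e) \<and>
                (\<forall>t \<in> {0..1}. \<forall>e \<in> topspace E. p e \<notin> U \<union> \<sigma> ` U \<longrightarrow> \<Psi>t t e = \<Psi> e)"
      using GLcase by blast
  qed
qed


end
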